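(* Let $f:\mathbb{R}^n\to\mathbb{R}$ be of class $C^{2+}$ with $L_f$-Lipschitz continuous gradient, let $g:\mathbb{R}^n\to\mathbb{R}\cup\{+\infty\}$ be proper, lower semicontinuous and $\rho$-weakly convex, let $\varphi=f+g$ with $\operatorname{argmin}\varphi\neq\emptyset$, and suppose $\{x:\varphi(x)\le\varphi(x^0)\}$ is bounded. Suppose the iterates $(x^k)$ generated by the NTRA algorithm described in the context converge to a critical point $x^\star$, that $f$ is of class $C^3$ locally around $x^\star$ and $\operatorname{prox}_{\gamma g}$ is of class $C^1$ locally around $x^\star-\gamma\nabla f(x^\star)$ (with $\gamma$ the stepsize of the algorithm, assumed sufficiently small), and that there is $\beta_2>0$ such that for every $k$ with $B_k$ indefinite, $m_k(0)-m_k(d^k)\ge\beta_2(-\lambda_{\min}(B_k))\delta_k^2$. Then $x^\star$ is a second-order stationary point of $\varphi$.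
   Context: $C^{2+}$: twice continuously differentiable with locally Lipschitz Hessian; $g$ is $\rho$-weakly convex if $g+\frac\rho2\|\cdot\|^2$ is convex. $\operatorname{prox}_{\gamma g}(x)=\operatorname{argmin}_z\{g(z)+\frac1{2\gamma}\|z-x\|^2\}$, $T_\gamma(x)=\operatorname{prox}_{\gamma g}(x-\gamma\nabla f(x))$, $R_\gamma(x)=\gamma^{-1}(x-T_\gamma(x))$; $x^\star$ is critical if $x^\star\in T_\gamma(x^\star)$. Forward-backward envelope $\varphi_\gamma(x)=\inf_u\{f(x)+\langle\nabla f(x),u-x\rangle+g(u)+\frac1{2\gamma}\|u-x\|^2\}$. $\partial_C$: Clarke generalized Jacobian. A point $x^\star$ is a second-order stationary point of $\varphi$ if $0\in\partial\varphi(x^\star)$ (limiting subdifferential) and $\mathrm d^2\varphi(x^\star,0)(d)\ge0$ for all $d$, with $\mathrm d^2$ the second subderivative (Rockafellar–Wets Def. 13.3). NTRA: given $x^0$, $\gamma\in(0,\min\{1/L_f,1/\rho\})$, $\delta_0>0$, $0<\mu_1<\mu_2<1$, $0<c_1<c_2<1<c_3$; for $k=0,1,\dots$: select $P_k\in\partial_C\operatorname{prox}_{\gamma g}(x^k-\gamma\nabla f(x^k))$; $Q_k=I-\gamma\nabla^2f(x^k)$, $B_k=\gamma^{-1}Q_k(I-P_kQ_k)$; stop if $R_\gamma(x^k)=0$ and $\lambda_{\min}(B_k)\ge0$; $d^k$ is an (approximate) solution of $\min_d m_k(d):=\varphi_\gamma(x^k)+\langle\nabla\varphi_\gamma(x^k),d\rangle+\frac12\langle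 B_kd,d\rangle$ s.t. $\|d\|\le\delta_k$; $\rho_k=\frac{\varphi_\gamma(x^k)-\varphi_\gamma(x^k+d^k)}{m_k(0)-m_k(d^k)}$; $x^{k+1}=x^k$ if $\rho_k<\mu_1$, else $x^k+d^k$; $\delta_{k+1}=c_1\delta_k$ if $\rho_k<\mu_1$, $c_2\delta_k$ if $\mu_1\le\rho_k<\mu_2$, $c_3\delta_k$ if $\rho_k\ge\mu_2$. *)

theory Defs
  imports "HOL-Analysis.Analysis"
begin

type_synonym 'n vec = "real ^ 'n"
type_synonym 'n mat = "real ^ 'n ^ 'n"

definition proper_fun :: "('n::finite vec \<Rightarrow> ereal) \<Rightarrow> bool" where
  "proper_fun g \<longleftrightarrow> (\<forall>x. g x \<noteq> -\<infinity>) \<and> (\<exists>x. g x \<noteq> \<infinity>)"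

definition lsc_fun :: "('n::finite vec \<Rightarrow> ereal) \<Rightarrow> bool" where
  "lsc_fun g \<longleftrightarrow> (\<forall>x. g x \<le> Liminf (at x) g)"

definition econvex :: "('n::finite vec \<Rightarrow> ereal) \<Rightarrow> bool" where
  "econvex h \<longleftrightarrow> (\<forall>x y t. 0 < t \<and> t < 1 \<longrightarrow>
      h ((1 - t) *\<^sub>R x + t *\<^sub>R y) \<le> ereal (1 - t) * h x + ereal t * h y)"

definition weakly_convex :: "real \<Rightarrow> ('n::finite vec \<Rightarrow> ereal) \<Rightarrow> bool" where
  "weakly_convex \<rho> g \<longleftrightarrow> econvex (\<lambda>x. g x + ereal (\<rho> / 2 * (norm x)\<^sup>2))"

definition prox_set :: "('n::finite vec \<Rightarrow> ereal) \<Rightarrow> real \<Rightarrow> 'n vec \<Rightarrow> 'n vec set" where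
  "prox_set g \<gamma> x = {z. \<forall>u. g z + ereal ((norm (z - x))\<^sup>2 / (2 * \<gamma>))
                              \<le> g u + ereal ((norm (u - x))\<^sup>2 / (2 * \<gamma>))}"

text \<open>The proximal mapping (single-valued when \<open>\<gamma> < 1/\<rho>\<close>).\<close>
definition prox :: "('n::finite vec \<Rightarrow> ereal) \<Rightarrow> real \<Rightarrow> 'n vec \<Rightarrow> 'n vec" where
  "prox g \<gamma> x = (SOME z. z \<in> prox_set g \<gamma> x)"

definition fbe :: "('n::finite vec \<Rightarrow> real) \<Rightarrow> ('n vec \<Rightarrow> 'n vec) \<Rightarrow> ('n vec \<Rightarrow> ereal)
                   \<Rightarrow> real \<Rightarrow> 'n vec \<Rightarrow> real" where
  "fbe f G g \<gamma> x = real_of_ereal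
     (INF u. ereal (f x + G x \<bullet> (u - x)) + g u + ereal ((norm (u - x))\<^sup>2 / (2 * \<gamma>)))"

definition grad :: "('n::finite vec \<Rightarrow> real) \<Rightarrow> 'n vec \<Rightarrow> 'n vec" where
  "grad F x = (THE v. (F has_derivative (\<lambda>h. v \<bullet> h)) (at x))"

definition bouligand_jac :: "('n::finite vec \<Rightarrow> 'n vec) \<Rightarrow> 'n vec \<Rightarrow> 'n mat set" where
  "bouligand_jac F x = {M. \<exists>xs Ms. xs \<longlonglongrightarrow> x \<and> Ms \<longlonglongrightarrow> M \<and>
       (\<forall>k. (F has_derivative (\<lambda>h. Ms k *v h)) (at (xs k)))}"

definition clarke_jac :: "('n::finite vec \<Rightarrow> 'n vec) \<Rightarrow> 'n vec \<Rightarrow> 'n mat set" where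
  "clarke_jac F x = convex hull (bouligand_jac F x)"

definition lambda_min :: "'n::finite mat \<Rightarrow> real" where
  "lambda_min B = Min {l. \<exists>v. v \<noteq> 0 \<and> B *v v = l *\<^sub>R v}"

definition frechet_subdiff :: "('n::finite vec \<Rightarrow> ereal) \<Rightarrow> 'n vec \<Rightarrow> 'n vec set" where
  "frechet_subdiff \<phi> x = {v. \<bar>\<phi> x\<bar> \<noteq> \<infinity> \<and>
      (\<forall>\<epsilon>>0. \<exists>\<eta>>0. \<forall>z. norm (z - x) < \<eta> \<longrightarrow>
          \<phi> z \<ge> \<phi> x + ereal (v \<bullet> (z - x) - \<epsilon> * norm (z - x)))}"

definition limiting_subdiff :: "('n::finite vec \<Rightarrow> ereal) \<Rightarrow> 'n vec \<Rightarrow> 'n vec set" where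
  "limiting_subdiff \<phi> x = {v. \<exists>xs vs. xs \<longlonglongrightarrow> x \<and> (\<lambda>k. \<phi> (xs k)) \<longlonglongrightarrow> \<phi> x \<and>
       vs \<longlonglongrightarrow> v \<and> (\<forall>k. vs k \<in> frechet_subdiff \<phi> (xs k))}"

text \<open>Second subderivative \<open>d\<^sup>2\<phi>(x|v)(w)\<close> (Rockafellar--Wets, Def. 13.3).\<close>
definition second_subderiv :: "('n::finite vec \<Rightarrow> ereal) \<Rightarrow> 'n vec \<Rightarrow> 'n vec \<Rightarrow> 'n vec \<Rightarrow> ereal" where
  "second_subderiv \<phi> x v w = Liminf (at_right 0 \<times>\<^sub>F nhds w)
      (\<lambda>(\<tau>::real, w'). (\<phi> (x + \<tau> *\<^sub>R w') - ereal (real_of_ereal (\<phi> x) + \<tau> * (v \<bullet> w')))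
                         * ereal (2 / \<tau>\<^sup>2))"

definition second_order_stationary :: "('n::finite vec \<Rightarrow> ereal) \<Rightarrow> 'n vec \<Rightarrow> bool" where
  "second_order_stationary \<phi> x \<longleftrightarrow>
     0 \<in> limiting_subdiff \<phi> x \<and> (\<forall>d. second_subderiv \<phi> x 0 d \<ge> 0)"

text \<open>\<open>ntra_run f G H g \<gamma> \<delta>0 \<mu>1 \<mu>2 c1 c2 c3 x d \<delta> P\<close>: the sequences \<open>x\<close> (iterates),
  \<open>d\<close> (trial steps), \<open>\<delta>\<close> (radii), \<open>P\<close> (selected Clarke Jacobians) are generated by NTRA
  with gradient \<open>G\<close> and Hessian \<open>H\<close> of \<open>f\<close>.\<close>

definition ntra_Q :: "('n::finite vec \<Rightarrow> 'n mat) \<Rightarrow> real \<Rightarrow> 'n vec \<Rightarrow> 'n mat" where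
  "ntra_Q H \<gamma> x = mat 1 - \<gamma> *\<^sub>R H x"

definition ntra_B :: "('n::finite vec \<Rightarrow> 'n mat) \<Rightarrow> real \<Rightarrow> 'n vec \<Rightarrow> 'n mat \<Rightarrow> 'n mat" where
  "ntra_B H \<gamma> x P = (1 / \<gamma>) *\<^sub>R (ntra_Q H \<gamma> x ** (mat 1 - P ** ntra_Q H \<gamma> x))"

definition ntra_model :: "('n::finite vec \<Rightarrow> real) \<Rightarrow> ('n vec \<Rightarrow> 'n vec) \<Rightarrow> ('n vec \<Rightarrow> ereal)
     \<Rightarrow> real \<Rightarrow> 'n vec \<Rightarrow> 'n mat \<Rightarrow> 'n vec \<Rightarrow> real" where
  "ntra_model f G g \<gamma> x B d =
     fbe f G g \<gamma> x + grad (fbe f G g \<gamma>) x \<bullet> d + 1 / 2 * (d \<bullet> (B *v d))"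

definition ntra_run ::
  "('n::finite vec \<Rightarrow> real) \<Rightarrow> ('n vec \<Rightarrow> 'n vec) \<Rightarrow> ('n vec \<Rightarrow> 'n mat) \<Rightarrow> ('n vec \<Rightarrow> ereal)
   \<Rightarrow> real \<Rightarrow> real \<Rightarrow> real \<Rightarrow> real \<Rightarrow> real \<Rightarrow> real \<Rightarrow> real
   \<Rightarrow> (nat \<Rightarrow> 'n vec) \<Rightarrow> (nat \<Rightarrow> 'n vec) \<Rightarrow> (nat \<Rightarrow> real) \<Rightarrow> (nat \<Rightarrow> 'n mat) \<Rightarrow> bool" where
  "ntra_run f G H g \<gamma> \<delta>0 \<mu>1 \<mu>2 c1 c2 c3 x d \<delta> P \<longleftrightarrow>
     \<delta> 0 = \<delta>0 \<and>
     (\<forall>k. let B = ntra_B H \<gamma> (x k) (P k);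
              m = ntra_model f G g \<gamma> (x k) B;
              \<phi>\<gamma> = fbe f G g \<gamma>;
              r = (\<phi>\<gamma> (x k) - \<phi>\<gamma> (x k + d k)) / (m 0 - m (d k))
          in P k \<in> clarke_jac (prox g \<gamma>) (x k - \<gamma> *\<^sub>R G (x k)) \<and>
             norm (d k) \<le> \<delta> k \<and>
             x (Suc k) = (if r < \<mu>1 then x k else x k + d k) \<and>
             \<delta> (Suc k) = (if r < \<mu>1 then c1 * \<delta> k
                           else if r < \<mu>2 then c2 * \<delta> k else c3 * \<delta> k))"

end

theory Submission
  imports Defs
begin

lemma norm_mv_le:
  fixes A :: "real^'n^'m"
  shows "norm (A *v x) \<le> norm A * norm x"
proof -
  have c: "\<bar>(A *v x) $ i\<bar> \<le> norm (A $ i) * norm x" for i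
    by (simp add: matrix_mult_dot Cauchy_Schwarz_ineq2)
  have "norm (A *v x) = L2_set (\<lambda>i. norm ((A *v x) $ i)) UNIV"
    by (simp add: norm_vec_def)
  also have "\<dots> \<le> L2_set (\<lambda>i. norm (A $ i) * norm x) UNIV"
    by (rule L2_set_mono) (use c in auto)
  also have "\<dots> = norm x * L2_set (\<lambda>i. norm (A $ i)) UNIV"
    by (subst L2_set_right_distrib) (auto simp: mult.commute)
  also have "\<dots> = norm A * norm x"
    by (simp add: norm_vec_def[of A] mult.commute)
  finally show ?thesis .
qed

lemma schwarz_aux:
  fixes F :: "real^'n \<Rightarrow> real" and Gr :: "real^'n \<Rightarrow> real^'n" and A :: "real^'n^'n"
  assumes r: "r > 0" and dF: "\<And>z. z \<in> ball y r \<Longrightarrow> (F has_derivative (\<lambda>h. Gr z \<bullet> h)) (at z)"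
    and dG: "(Gr has_derivative (\<lambda>h. A *v h)) (at y)"
    and e: "e > 0"
  shows "\<exists>t0>0. \<forall>t. 0 < t \<and> t < t0 \<longrightarrow>
     \<bar>F (y + t *\<^sub>R u + t *\<^sub>R v) - F (y + t *\<^sub>R u) - F (y + t *\<^sub>R v) + F y - t\<^sup>2 * (u \<bullet> (A *v v))\<bar> \<le> e * t\<^sup>2"
proof -
  define K where "K = (2 * norm u + norm v) * norm u + 1"
  have K: "K > 0" unfolding K_def by (simp add: add_nonneg_pos)
  obtain d where d: "d > 0" and dd: "\<And>w. norm w < d \<Longrightarrow> norm (Gr (y + w) - Gr y - A *v w) \<le> (e / K) * norm w"
    using dG e K unfolding has_derivative_at_alt
    by (metis add_diff_cancel_left' divide_pos_pos)
  define t0 where "t0 = min d r / (norm u + norm v + 1)"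
  have t0: "t0 > 0" using d r unfolding t0_def by (simp add: add_nonneg_pos)
  show ?thesis
  proof (intro exI[of _ t0] conjI allI impI)
    show "t0 > 0" by fact
    fix t :: real assume t: "0 < t \<and> t < t0"
    have tb: "t * (norm u + norm v) < min d r"
    proof -
      have p: "norm u + norm v + 1 > 0" by (simp add: add_nonneg_pos)
      have "t * (norm u + norm v) \<le> t * (norm u + norm v + 1)" using t by simp
      also have "\<dots> < t0 * (norm u + norm v + 1)" using t p by simp
      also have "\<dots> = min d r" unfolding t0_def using p by simp
      finally show ?thesis .
    qed
    have small: "norm (s *\<^sub>R u + t *\<^sub>R v) < min d r" if "0 \<le> s" "s \<le> t" for s
    proof -
      have "norm (s *\<^sub>R u + t *\<^sub>R v) \<le> s * norm u + t * norm v"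
        using that norm_triangle_ineq[of "s *\<^sub>R u" "t *\<^sub>R v"] t by simp
      also have "\<dots> \<le> t * (norm u + norm v)" using that by (simp add: mult_right_mono algebra_simps)
      finally show ?thesis using tb by linarith
    qed
    have small2: "norm (s *\<^sub>R u) < min d r" if "0 \<le> s" "s \<le> t" for s
    proof -
      have "norm (s *\<^sub>R u) \<le> t * (norm u + norm v)" using that t
        by (simp add: mult_mono algebra_simps add_increasing2)
      then show ?thesis using tb by linarith
    qed
    define \<phi> where "\<phi> s = F (y + s *\<^sub>R u + t *\<^sub>R v) - F (y + s *\<^sub>R u) - s * ((A *v (t *\<^sub>R v)) \<bullet> u)" for s
    define \<phi>' where "\<phi>' s = (Gr (y + s *\<^sub>R u + t *\<^sub>R v) - Gr (y + s *\<^sub>R u) - A *v (t *\<^sub>R v)) \<bullet> u" for s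
    have der: "(\<phi> has_real_derivative \<phi>' s) (at s)" if "0 \<le> s" "s \<le> t" for s
    proof -
      have b1: "y + s *\<^sub>R u + t *\<^sub>R v \<in> ball y r"
        proof -
        have "dist y (y + s *\<^sub>R u + t *\<^sub>R v) = norm (s *\<^sub>R u + t *\<^sub>R v)"
          by (metis add.assoc add_diff_cancel_left' dist_commute dist_norm)
        then show ?thesis using small[OF that] by simp
      qed
      have b2: "y + s *\<^sub>R u \<in> ball y r"
        using small2[OF that] by (simp add: dist_norm)
      have l1: "((\<lambda>s. y + s *\<^sub>R u + t *\<^sub>R v) has_derivative (\<lambda>h. h *\<^sub>R u)) (at s)"
        by (auto intro!: derivative_eq_intros)
      have l2: "((\<lambda>s. y + s *\<^sub>R u) has_derivative (\<lambda>h. h *\<^sub>R u)) (at s)"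
        by (auto intro!: derivative_eq_intros)
      have c1: "((\<lambda>s. F (y + s *\<^sub>R u + t *\<^sub>R v)) has_derivative (\<lambda>h. Gr (y + s *\<^sub>R u + t *\<^sub>R v) \<bullet> (h *\<^sub>R u))) (at s)"
        using has_derivative_compose[OF l1 dF[OF b1]] by simp
      have c2: "((\<lambda>s. F (y + s *\<^sub>R u)) has_derivative (\<lambda>h. Gr (y + s *\<^sub>R u) \<bullet> (h *\<^sub>R u))) (at s)"
        using has_derivative_compose[OF l2 dF[OF b2]] by simp
      have "(\<phi> has_derivative (\<lambda>h. Gr (y + s *\<^sub>R u + t *\<^sub>R v) \<bullet> (h *\<^sub>R u) - Gr (y + s *\<^sub>R u) \<bullet> (h *\<^sub>R u) - h * ((A *v (t *\<^sub>R v)) \<bullet> u))) (at s)"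
        unfolding \<phi>_def by (intro derivative_intros c1 c2)
      moreover have "(\<lambda>h. Gr (y + s *\<^sub>R u + t *\<^sub>R v) \<bullet> (h *\<^sub>R u) - Gr (y + s *\<^sub>R u) \<bullet> (h *\<^sub>R u) - h * ((A *v (t *\<^sub>R v)) \<bullet> u)) = (\<lambda>h. \<phi>' s * h)"
        unfolding \<phi>'_def by (auto simp: inner_diff_left algebra_simps)
      ultimately show ?thesis by (simp add: has_field_derivative_def)
    qed
    obtain z where z: "0 < z" "z < t" and eq: "\<phi> t - \<phi> 0 = (t - 0) * \<phi>' z"
      using MVT2[of 0 t \<phi> \<phi>'] der t by auto
    have bnd: "\<bar>\<phi>' z\<bar> \<le> e * t"
    proof -
      have n1: "norm (Gr (y + (z *\<^sub>R u + t *\<^sub>R v)) - Gr y - A *v (z *\<^sub>R u + t *\<^sub>R v)) \<le> (e / K) * norm (z *\<^sub>R u + t *\<^sub>R v)"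
        using dd small[of z] z by simp
      have n2: "norm (Gr (y + z *\<^sub>R u) - Gr y - A *v (z *\<^sub>R u)) \<le> (e / K) * norm (z *\<^sub>R u)"
        using dd[of "z *\<^sub>R u"] small2[of z] z by simp
      have eqv: "Gr (y + z *\<^sub>R u + t *\<^sub>R v) - Gr (y + z *\<^sub>R u) - A *v (t *\<^sub>R v)
          = (Gr (y + (z *\<^sub>R u + t *\<^sub>R v)) - Gr y - A *v (z *\<^sub>R u + t *\<^sub>R v)) - (Gr (y + z *\<^sub>R u) - Gr y - A *v (z *\<^sub>R u))"
        by (simp add: matrix_vector_right_distrib algebra_simps add.assoc)
      have "norm (Gr (y + z *\<^sub>R u + t *\<^sub>R v) - Gr (y + z *\<^sub>R u) - A *v (t *\<^sub>R v))
            \<le> (e / K) * norm (z *\<^sub>R u + t *\<^sub>R v) + (e / K) * norm (z *\<^sub>R u)"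
        unfolding eqv using n1 n2 norm_triangle_ineq4 by (smt (verit))
      also have "\<dots> \<le> (e / K) * (t * (2 * norm u + norm v))"
      proof -
        have "norm (z *\<^sub>R u + t *\<^sub>R v) \<le> t * norm u + t * norm v"
          using norm_triangle_ineq[of "z *\<^sub>R u" "t *\<^sub>R v"] z
          by (smt (verit, best) mult_right_mono norm_ge_zero norm_scaleR)
        moreover have "norm (z *\<^sub>R u) \<le> t * norm u" using z by (simp add: mult_right_mono)
        ultimately show ?thesis using e K
          by (smt (verit, best) distrib_left divide_pos_pos mult_left_mono)
      qed
      finally have nn: "norm (Gr (y + z *\<^sub>R u + t *\<^sub>R v) - Gr (y + z *\<^sub>R u) - A *v (t *\<^sub>R v)) \<le> (e / K) * (t * (2 * norm u + norm v))" .
      have "\<bar>\<phi>' z\<bar> \<le> norm (Gr (y + z *\<^sub>R u + t *\<^sub>R v) - Gr (y + z *\<^sub>R u) - A *v (t *\<^sub>R v)) * norm u"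
        unfolding \<phi>'_def by (rule Cauchy_Schwarz_ineq2)
      also have "\<dots> \<le> (e / K) * (t * (2 * norm u + norm v)) * norm u"
        by (rule mult_right_mono[OF nn]) simp
      also have "\<dots> = e * t * (((2 * norm u + norm v) * norm u) / K)" by (simp add: field_simps)
      also have "\<dots> \<le> e * t * 1"
        using K e t by (intro mult_left_mono) (auto simp: K_def)
      finally show ?thesis by simp
    qed
    have "F (y + t *\<^sub>R u + t *\<^sub>R v) - F (y + t *\<^sub>R u) - F (y + t *\<^sub>R v) + F y - t\<^sup>2 * (u \<bullet> (A *v v)) = \<phi> t - \<phi> 0"
      unfolding \<phi>_def by (simp add: matrix_vector_mult_scaleR power2_eq_square inner_commute algebra_simps)
    also have "\<bar>\<dots>\<bar> \<le> t * (e * t)" using eq bnd t by (simp add: abs_mult mult_left_mono)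
    finally show "\<bar>F (y + t *\<^sub>R u + t *\<^sub>R v) - F (y + t *\<^sub>R u) - F (y + t *\<^sub>R v) + F y - t\<^sup>2 * (u \<bullet> (A *v v))\<bar> \<le> e * t\<^sup>2"
      by (simp add: power2_eq_square algebra_simps)
  qed
qed

lemma schwarz_sym:
  fixes F :: "real^'n \<Rightarrow> real" and Gr :: "real^'n \<Rightarrow> real^'n" and A :: "real^'n^'n"
  assumes r: "r > 0" and dF: "\<And>z. z \<in> ball y r \<Longrightarrow> (F has_derivative (\<lambda>h. Gr z \<bullet> h)) (at z)"
    and dG: "(Gr has_derivative (\<lambda>h. A *v h)) (at y)"
  shows "u \<bullet> (A *v v) = v \<bullet> (A *v u)"
proof (rule ccontr)
  assume ne: "u \<bullet> (A *v v) \<noteq> v \<bullet> (A *v u)"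
  define e where "e = \<bar>u \<bullet> (A *v v) - v \<bullet> (A *v u)\<bar> / 4"
  have e: "e > 0" using ne unfolding e_def by simp
  obtain t1 where t1: "t1 > 0" and h1: "\<And>t. 0 < t \<and> t < t1 \<Longrightarrow>
     \<bar>F (y + t *\<^sub>R u + t *\<^sub>R v) - F (y + t *\<^sub>R u) - F (y + t *\<^sub>R v) + F y - t\<^sup>2 * (u \<bullet> (A *v v))\<bar> \<le> e * t\<^sup>2"
    using schwarz_aux[OF r dF dG e] by blast
  obtain t2 where t2: "t2 > 0" and h2: "\<And>t. 0 < t \<and> t < t2 \<Longrightarrow>
     \<bar>F (y + t *\<^sub>R v + t *\<^sub>R u) - F (y + t *\<^sub>R v) - F (y + t *\<^sub>R u) + F y - t\<^sup>2 * (v \<bullet> (A *v u))\<bar> \<le> e * t\<^sup>2"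
    using schwarz_aux[OF r dF dG e] by blast
  define t where "t = min t1 t2 / 2"
  have t: "0 < t" "t < t1" "t < t2" using t1 t2 unfolding t_def by auto
  note a1 = h1[of t] and a2 = h2[of t]
  have sw: "y + t *\<^sub>R v + t *\<^sub>R u = y + t *\<^sub>R u + t *\<^sub>R v" by (simp add: algebra_simps)
  define X where "X = F (y + t *\<^sub>R u + t *\<^sub>R v) - F (y + t *\<^sub>R u) - F (y + t *\<^sub>R v) + F y"
  have b1: "\<bar>X - t\<^sup>2 * (u \<bullet> (A *v v))\<bar> \<le> e * t\<^sup>2" using a1 t unfolding X_def by simp
  have b2: "\<bar>X - t\<^sup>2 * (v \<bullet> (A *v u))\<bar> \<le> e * t\<^sup>2" using a2 t unfolding X_def sw by simp
  have "t\<^sup>2 * \<bar>u \<bullet> (A *v v) - v \<bullet> (A *v u)\<bar> = \<bar>(X - t\<^sup>2 * (v \<bullet> (A *v u))) - (X - t\<^sup>2 * (u \<bullet> (A *v v)))\<bar>"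
    by (simp add: abs_mult abs_minus_commute flip: right_diff_distrib)
  also have "\<dots> \<le> 2 * (e * t\<^sup>2)" using b1 b2 by (smt (verit))
  also have "\<dots> = t\<^sup>2 * (2 * e)" by simp
  finally have "t\<^sup>2 * \<bar>u \<bullet> (A *v v) - v \<bullet> (A *v u)\<bar> \<le> t\<^sup>2 * (2 * e)" .
  moreover have "t\<^sup>2 > 0" using t by simp
  ultimately have "\<bar>u \<bullet> (A *v v) - v \<bullet> (A *v u)\<bar> \<le> 2 * e" by (rule mult_left_le_imp_le)
  then show False using e unfolding e_def by simp
qed

lemma eig_finite:
  fixes B :: "real^'n^'n"
  assumes sym: "\<And>u v. u \<bullet> (B *v v) = v \<bullet> (B *v u)"
  shows "finite {l. \<exists>v. v \<noteq> 0 \<and> B *v v = l *\<^sub>R v}"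
proof -
  define E where "E = {l. \<exists>v. v \<noteq> 0 \<and> B *v v = l *\<^sub>R v}"
  define ev where "ev l = (SOME v. v \<noteq> 0 \<and> B *v v = l *\<^sub>R v)" for l
  have ev: "ev l \<noteq> 0 \<and> B *v ev l = l *\<^sub>R ev l" if "l \<in> E" for l
    using that unfolding E_def ev_def by (rule CollectE) (rule someI_ex)
  have inj: "inj_on ev E"
  proof (rule inj_onI)
    fix a b assume a: "a \<in> E" and b: "b \<in> E" and eq: "ev a = ev b"
    have "a *\<^sub>R ev a = b *\<^sub>R ev a" using ev[OF a] ev[OF b] eq by metis
    then show "a = b" using ev[OF a] by simp
  qed
  have orth: "pairwise orthogonal (ev ` E)"
  proof (clarsimp simp: pairwise_def)
    fix a b assume a: "a \<in> E" and b: "b \<in> E" and ne: "ev a \<noteq> ev b"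
    have ab: "a \<noteq> b" using ne by auto
    have "a * (ev b \<bullet> ev a) = ev b \<bullet> (B *v ev a)" using ev[OF a] by simp
    also have "\<dots> = ev a \<bullet> (B *v ev b)" by (rule sym)
    also have "\<dots> = b * (ev a \<bullet> ev b)" using ev[OF b] by simp
    finally have "(a - b) * (ev a \<bullet> ev b) = 0" by (simp add: inner_commute algebra_simps)
    then show "orthogonal (ev a) (ev b)" using ab by (simp add: orthogonal_def)
  qed
  have "0 \<notin> ev ` E" using ev by auto
  then have "finite (ev ` E)" using orth pairwise_orthogonal_independent eucl.finiteI_independent by blast
  then have "finite E" using inj finite_image_iff by blast
  then show ?thesis unfolding E_def .
qed

lemma rayleigh_min_eig:
  fixes B :: "real^'n^'n"
  assumes sym: "\<And>u v. u \<bullet> (B *v v) = v \<bullet> (B *v u)"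
  obtains w0 \<mu> where "w0 \<noteq> 0" "B *v w0 = \<mu> *\<^sub>R w0" "\<And>w. w \<bullet> (B *v w) \<ge> \<mu> * (w \<bullet> w)"
proof -
  define q where "q w = w \<bullet> (B *v w)" for w :: "real^'n"
  have cq: "continuous_on (sphere 0 1) q" unfolding q_def
    by (intro continuous_intros)
  have ne: "sphere (0::real^'n) 1 \<noteq> {}" by simp
  obtain w0 where w0: "w0 \<in> sphere 0 1" and mn: "\<And>y. y \<in> sphere 0 1 \<Longrightarrow> q w0 \<le> q y"
    using continuous_attains_inf[OF compact_sphere ne cq] by blast
  define \<mu> where "\<mu> = q w0"
  have nw0: "norm w0 = 1" using w0 by simp
  have ge: "q w \<ge> \<mu> * (w \<bullet> w)" for w
  proof (cases "w = 0")
    case True then show ?thesis by (simp add: q_def)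
  next
    case False
    define u where "u = (1 / norm w) *\<^sub>R w"
    have "u \<in> sphere 0 1" using False unfolding u_def by simp
    then have "\<mu> \<le> q u" using mn unfolding \<mu>_def by blast
    also have "q u = q w / (norm w)\<^sup>2" unfolding q_def u_def
      by (simp add: matrix_vector_mult_scaleR power2_eq_square)
    finally have "\<mu> * (norm w)\<^sup>2 \<le> q w" using False by (simp add: pos_le_divide_eq)
    then show ?thesis by (simp add: power2_norm_eq_inner)
  qed
  define h where "h w = q w - \<mu> * (w \<bullet> w)" for w
  have h0: "h w \<ge> 0" for w using ge[of w] unfolding h_def by simp
  have hw0: "h w0 = 0" unfolding h_def \<mu>_def using nw0 by (simp add: power2_norm_eq_inner[symmetric])
  define z where "z = B *v w0 - \<mu> *\<^sub>R w0"
  have exp: "h (w0 + t *\<^sub>R z) = h w0 + 2 * t * (z \<bullet> z) + t\<^sup>2 * h z" for t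
  proof -
    have s: "w0 \<bullet> (B *v z) = z \<bullet> (B *v w0)" by (rule sym)
    show ?thesis unfolding h_def q_def z_def
      using s unfolding z_def
      by (simp add: matrix_vector_right_distrib matrix_vector_mult_scaleR inner_add_left inner_add_right
          inner_diff_left inner_diff_right inner_commute power2_eq_square algebra_simps)
  qed
  have z0: "z = 0"
  proof (rule ccontr)
    assume "z \<noteq> 0"
    then have a: "z \<bullet> z > 0" by simp
    define c where "c = h z"
    have c: "c \<ge> 0" unfolding c_def by (rule h0)
    define t where "t = - (z \<bullet> z) / (c + 1)"
    have "h (w0 + t *\<^sub>R z) = 2 * t * (z \<bullet> z) + t\<^sup>2 * c" using exp hw0 c_def by simp
    also have "\<dots> = (z \<bullet> z)\<^sup>2 * (- c - 2) / (c + 1)\<^sup>2"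
    proof -
      have p: "c + 1 > 0" using c by simp
      define a where "a = z \<bullet> z"
      have gen: "2 * (- a / k) * a + (- a / k)\<^sup>2 * (k - 1) = a\<^sup>2 * (- k - 1) / k\<^sup>2" if "k > 0" for k
        using that by (simp add: field_simps power2_eq_square)
      have "2 * (- a / (c + 1)) * a + (- a / (c + 1))\<^sup>2 * c = a\<^sup>2 * (- c - 2) / (c + 1)\<^sup>2"
        using gen[of "c+1"] p by (simp add: algebra_simps)
      then show ?thesis unfolding t_def a_def by simp
    qed
    also have "\<dots> < 0" using a c by (intro divide_neg_pos mult_pos_neg) auto
    finally show False using h0 by (metis not_le)
  qed
  show ?thesis
  proof
    show "w0 \<noteq> 0" using nw0 by auto
    show "B *v w0 = \<mu> *\<^sub>R w0" using z0 unfolding z_def by simp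
    show "\<And>w. w \<bullet> (B *v w) \<ge> \<mu> * (w \<bullet> w)" using ge unfolding q_def .
  qed
qed

lemma lambda_min_le:
  fixes B :: "real^'n^'n"
  assumes sym: "\<And>u v. u \<bullet> (B *v v) = v \<bullet> (B *v u)" and v: "v \<noteq> 0"
  shows "lambda_min B \<le> (v \<bullet> (B *v v)) / (v \<bullet> v)"
proof -
  obtain w0 \<mu> where w0: "w0 \<noteq> 0" "B *v w0 = \<mu> *\<^sub>R w0" and ge: "\<And>w. w \<bullet> (B *v w) \<ge> \<mu> * (w \<bullet> w)"
    using rayleigh_min_eig[OF sym] by blast
  have "\<mu> \<in> {l. \<exists>v. v \<noteq> 0 \<and> B *v v = l *\<^sub>R v}" using w0 by blast
  then have "lambda_min B \<le> \<mu>" unfolding lambda_min_def using eig_finite[OF sym] by simp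
  also have "\<mu> \<le> (v \<bullet> (B *v v)) / (v \<bullet> v)" using ge[of v] v by (simp add: pos_le_divide_eq)
  finally show ?thesis .
qed

lemma prox_set_finite:
  assumes pr: "proper_fun g" and p: "p \<in> prox_set g \<gamma> y"
  shows "\<bar>g p\<bar> \<noteq> \<infinity>"
proof -
  obtain x where x: "g x \<noteq> \<infinity>" using pr unfolding proper_fun_def by auto
  have "g p + ereal ((norm (p - y))\<^sup>2 / (2 * \<gamma>)) \<le> g x + ereal ((norm (x - y))\<^sup>2 / (2 * \<gamma>))"
    using p unfolding prox_set_def by blast
  moreover have "g x + ereal ((norm (x - y))\<^sup>2 / (2 * \<gamma>)) \<noteq> \<infinity>" using x by simp
  ultimately have "g p \<noteq> \<infinity>" by auto
  moreover have "g p \<noteq> -\<infinity>" using pr unfolding proper_fun_def by auto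
  ultimately show ?thesis by auto
qed

lemma lsc_sublevel_closed:
  fixes g :: "real^'n \<Rightarrow> ereal" and q :: "real^'n \<Rightarrow> real"
  assumes lsc: "lsc_fun g" and cq: "continuous_on UNIV q"
  shows "closed {u. g u + ereal (q u) \<le> ereal c}"
proof -
  have "open {u. ereal c < g u + ereal (q u)}"
  proof (subst open_subopen, intro ballI)
    fix u assume "u \<in> {u. ereal c < g u + ereal (q u)}"
    then have lt: "ereal (c - q u) < g u"
      by (cases "g u") (auto simp: algebra_simps)
    obtain c1 where c1: "ereal (c - q u) < ereal c1" "ereal c1 < g u"
      using ereal_dense2[OF lt] by blast
    have "eventually (\<lambda>z. ereal c1 < g z) (at u)"
      using lsc unfolding lsc_fun_def using le_Liminf_iff[of "g u" "at u" g] c1(2) by blast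
    then have ev1: "eventually (\<lambda>z. ereal c1 < g z) (nhds u)"
      using c1(2) unfolding eventually_at_filter by (auto elim: eventually_mono)
    have "isCont q u" using cq by (simp add: continuous_on_eq_continuous_at)
    then have "eventually (\<lambda>z. q z > c - c1) (at u)"
      using c1(1) by (intro order_tendstoD(1)) (auto simp: isCont_def)
    then have "eventually (\<lambda>z. q z > c - c1) (nhds u)"
      using c1(1) unfolding eventually_at_filter by (auto elim: eventually_mono)
    then have "eventually (\<lambda>z. ereal c < g z + ereal (q z)) (nhds u)"
      using ev1
    proof eventually_elim
      case (elim z)
      then show ?case by (cases "g z") auto
    qed
    then obtain T where "open T" "u \<in> T" "\<forall>z\<in>T. ereal c < g z + ereal (q z)"
      unfolding eventually_nhds by blast
    then show "\<exists>T. open T \<and> u \<in> T \<and> T \<subseteq> {u. ereal c < g u + ereal (q u)}" by blast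
  qed
  then have "closed (- {u. ereal c < g u + ereal (q u)})" by (simp add: closed_Compl)
  moreover have "- {u. ereal c < g u + ereal (q u)} = {u. g u + ereal (q u) \<le> ereal c}" by auto
  ultimately show ?thesis by simp
qed

lemma minorant_step:
  fixes xs ys w :: "real^'n" and gx gu gz t \<rho> \<gamma> :: real
  assumes t: "0 < t" and g: "\<gamma> > 0" and r: "\<rho> \<ge> 0"
    and i: "gz + \<rho>/2 * ((xs + t *\<^sub>R w) \<bullet> (xs + t *\<^sub>R w)) \<le> (1 - t) * (gx + \<rho>/2 * (xs \<bullet> xs)) + t * (gu + \<rho>/2 * ((xs + w) \<bullet> (xs + w)))"
    and ii: "gx + ((xs - ys) \<bullet> (xs - ys)) / (2 * \<gamma>) \<le> gz + ((xs + t *\<^sub>R w - ys) \<bullet> (xs + t *\<^sub>R w - ys)) / (2 * \<gamma>)"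
  shows "gu + \<rho>/2 * ((xs + w) \<bullet> (xs + w)) - gx - \<rho>/2 * (xs \<bullet> xs) \<ge> \<rho> * (w \<bullet> xs) - (w \<bullet> (xs - ys)) / \<gamma> - t * ((w \<bullet> w) / (2 * \<gamma>))"
proof -
  define X where "X = gu + \<rho>/2 * ((xs + w) \<bullet> (xs + w)) - gx - \<rho>/2 * (xs \<bullet> xs)"
  have e1: "(xs + t *\<^sub>R w) \<bullet> (xs + t *\<^sub>R w) = xs \<bullet> xs + 2 * t * (w \<bullet> xs) + t\<^sup>2 * (w \<bullet> w)"
    by (simp add: inner_add_left inner_add_right inner_commute power2_eq_square algebra_simps)
  have e2: "(xs + t *\<^sub>R w - ys) \<bullet> (xs + t *\<^sub>R w - ys) = (xs - ys) \<bullet> (xs - ys) + 2 * t * (w \<bullet> (xs - ys)) + t\<^sup>2 * (w \<bullet> w)"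
    by (simp add: inner_add_left inner_add_right inner_diff_left inner_diff_right inner_commute power2_eq_square algebra_simps)
  have a: "t * X \<ge> gz + \<rho>/2 * ((xs + t *\<^sub>R w) \<bullet> (xs + t *\<^sub>R w)) - gx - \<rho>/2 * (xs \<bullet> xs)"
  proof -
    have "t * X = (1 - t) * (gx + \<rho>/2 * (xs \<bullet> xs)) + t * (gu + \<rho>/2 * ((xs + w) \<bullet> (xs + w))) - (gx + \<rho>/2 * (xs \<bullet> xs))"
      unfolding X_def by (simp add: field_simps)
    then show ?thesis using i by linarith
  qed
  have b: "gz - gx \<ge> - ((2 * t * (w \<bullet> (xs - ys)) + t\<^sup>2 * (w \<bullet> w)) / (2 * \<gamma>))"
  proof -
    have "((xs - ys) \<bullet> (xs - ys) + 2 * t * (w \<bullet> (xs - ys)) + t\<^sup>2 * (w \<bullet> w)) / (2 * \<gamma>)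
       = ((xs - ys) \<bullet> (xs - ys)) / (2 * \<gamma>) + (2 * t * (w \<bullet> (xs - ys)) + t\<^sup>2 * (w \<bullet> w)) / (2 * \<gamma>)"
      by (simp add: add_divide_distrib)
    then show ?thesis using ii unfolding e2 by linarith
  qed
  have "t * X \<ge> - ((2 * t * (w \<bullet> (xs - ys)) + t\<^sup>2 * (w \<bullet> w)) / (2 * \<gamma>)) + \<rho>/2 * (2 * t * (w \<bullet> xs) + t\<^sup>2 * (w \<bullet> w))"
  proof -
    have "\<rho>/2 * ((xs + t *\<^sub>R w) \<bullet> (xs + t *\<^sub>R w)) - \<rho>/2 * (xs \<bullet> xs) = \<rho>/2 * (2 * t * (w \<bullet> xs) + t\<^sup>2 * (w \<bullet> w))"
      unfolding e1 by (simp add: algebra_simps)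
    then show ?thesis using a b by linarith
  qed
  moreover have "\<rho>/2 * (t\<^sup>2 * (w \<bullet> w)) \<ge> 0" using r by simp
  moreover have "- ((2 * t * (w \<bullet> (xs - ys)) + t\<^sup>2 * (w \<bullet> w)) / (2 * \<gamma>)) + \<rho>/2 * (2 * t * (w \<bullet> xs) + t\<^sup>2 * (w \<bullet> w))
     = t * (\<rho> * (w \<bullet> xs) - (w \<bullet> (xs - ys)) / \<gamma> - t * ((w \<bullet> w) / (2 * \<gamma>))) + \<rho>/2 * (t\<^sup>2 * (w \<bullet> w))"
    using g by (simp add: field_simps power2_eq_square)
  ultimately have "t * X \<ge> t * (\<rho> * (w \<bullet> xs) - (w \<bullet> (xs - ys)) / \<gamma> - t * ((w \<bullet> w) / (2 * \<gamma>)))"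
    by linarith
  then show ?thesis unfolding X_def[symmetric] using t by simp
qed


lemma wc_minorant:
  fixes g :: "real^'n \<Rightarrow> ereal"
  assumes pr: "proper_fun g" and wc: "weakly_convex \<rho> g" and g: "\<gamma> > 0" and r: "\<rho> \<ge> 0"
    and xs: "xs \<in> prox_set g \<gamma> ys"
  shows "g u \<ge> ereal (real_of_ereal (g xs) + \<rho>/2 * (xs \<bullet> xs) - \<rho>/2 * (u \<bullet> u) + \<rho> * ((u - xs) \<bullet> xs) - ((u - xs) \<bullet> (xs - ys)) / \<gamma>)"
proof -
  define gx where "gx = real_of_ereal (g xs)"
  have gxe: "g xs = ereal gx" using prox_set_finite[OF pr xs] unfolding gx_def by (cases "g xs") auto
  show ?thesis
  proof (cases "g u")
    case PInf then show ?thesis by simp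
  next
    case MInf then show ?thesis using pr unfolding proper_fun_def by auto
  next
    case (real gu)
    define w where "w = u - xs"
    define X where "X = gu + \<rho>/2 * ((xs + w) \<bullet> (xs + w)) - gx - \<rho>/2 * (xs \<bullet> xs)"
    define L where "L = \<rho> * (w \<bullet> xs) - (w \<bullet> (xs - ys)) / \<gamma>"
    define C where "C = (w \<bullet> w) / (2 * \<gamma>)"
    have C: "C \<ge> 0" unfolding C_def using g by simp
    have step: "X \<ge> L - t * C" if t: "0 < t" "t < 1" for t
    proof -
      have cv: "g ((1 - t) *\<^sub>R xs + t *\<^sub>R u) + ereal (\<rho> / 2 * (norm ((1 - t) *\<^sub>R xs + t *\<^sub>R u))\<^sup>2)
          \<le> ereal (1 - t) * (g xs + ereal (\<rho> / 2 * (norm xs)\<^sup>2)) + ereal t * (g u + ereal (\<rho> / 2 * (norm u)\<^sup>2))"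
        using wc t unfolding weakly_convex_def econvex_def by blast
      have zeq: "(1 - t) *\<^sub>R xs + t *\<^sub>R u = xs + t *\<^sub>R w" unfolding w_def by (simp add: algebra_simps)
      have ueq: "u = xs + w" unfolding w_def by simp
      have rhs: "ereal (1 - t) * (g xs + ereal (\<rho> / 2 * (norm xs)\<^sup>2)) + ereal t * (g u + ereal (\<rho> / 2 * (norm u)\<^sup>2))
          = ereal ((1 - t) * (gx + \<rho>/2 * (xs \<bullet> xs)) + t * (gu + \<rho>/2 * ((xs + w) \<bullet> (xs + w))))"
        using gxe real ueq by (simp add: power2_norm_eq_inner)
      have "g (xs + t *\<^sub>R w) \<noteq> \<infinity>" using cv unfolding zeq rhs by auto
      moreover have "g (xs + t *\<^sub>R w) \<noteq> -\<infinity>" using pr unfolding proper_fun_def by auto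
      ultimately obtain gz where gz: "g (xs + t *\<^sub>R w) = ereal gz" by (cases "g (xs + t *\<^sub>R w)") auto
      have i: "gz + \<rho>/2 * ((xs + t *\<^sub>R w) \<bullet> (xs + t *\<^sub>R w)) \<le> (1 - t) * (gx + \<rho>/2 * (xs \<bullet> xs)) + t * (gu + \<rho>/2 * ((xs + w) \<bullet> (xs + w)))"
        using cv unfolding zeq rhs gz by (simp add: power2_norm_eq_inner)
      have "g xs + ereal ((norm (xs - ys))\<^sup>2 / (2 * \<gamma>)) \<le> g (xs + t *\<^sub>R w) + ereal ((norm (xs + t *\<^sub>R w - ys))\<^sup>2 / (2 * \<gamma>))"
        using xs unfolding prox_set_def by blast
      then have ii: "gx + ((xs - ys) \<bullet> (xs - ys)) / (2 * \<gamma>) \<le> gz + ((xs + t *\<^sub>R w - ys) \<bullet> (xs + t *\<^sub>R w - ys)) / (2 * \<gamma>)"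
        unfolding gxe gz by (simp add: power2_norm_eq_inner)
      show ?thesis using minorant_step[OF t(1) g r i ii] unfolding X_def L_def C_def by simp
    qed
    have "X \<ge> L"
    proof -
      have "L \<le> X + e" if e: "e > 0" for e
      proof -
        define t where "t = min (1/2) (e / (C + 1))"
        have t: "0 < t" "t < 1" unfolding t_def using e C by auto
        have "t * C \<le> (e / (C + 1)) * C" unfolding t_def using C by (intro mult_right_mono) auto
        also have "\<dots> \<le> e" using e C by (simp add: field_simps)
        finally show ?thesis using step[OF t] by linarith
      qed
      then show ?thesis by (rule field_le_epsilon)
    qed
    then show ?thesis unfolding real X_def L_def w_def gx_def[symmetric] by (simp add: algebra_simps)
  qed
qed


lemma coercive_aux:
  fixes \<kappa> A c M s :: real
  assumes k: "\<kappa> > 0" and A: "A \<ge> 0" and s: "s > (A + \<bar>c\<bar> + \<bar>M\<bar> + 1) / \<kappa> + 1"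
  shows "\<kappa> * s\<^sup>2 - A * s - \<bar>c\<bar> > M"
proof -
  have s1: "s \<ge> 1" using s k A by (smt (verit) divide_nonneg_pos)
  have "\<kappa> * s > A + \<bar>c\<bar> + \<bar>M\<bar> + 1" using s k by (simp add: field_simps)
  then have h: "\<kappa> * s - A \<ge> 1" "\<kappa> * s - A \<ge> \<bar>c\<bar> + \<bar>M\<bar> + 1" by auto
  have "s * (\<kappa> * s - A) \<ge> 1 * (\<kappa> * s - A)" using s1 h by (intro mult_right_mono) auto
  then have "\<kappa> * s\<^sup>2 - A * s \<ge> \<bar>c\<bar> + \<bar>M\<bar> + 1" using h by (simp add: power2_eq_square algebra_simps)
  then show ?thesis by linarith
qed

lemma quad_lower:
  fixes \<kappa> A s :: real
  assumes k: "\<kappa> > 0"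
  shows "\<kappa> * s\<^sup>2 - A * s \<ge> - A\<^sup>2 / (4 * \<kappa>)"
proof -
  have "0 \<le> (2 * \<kappa> * s - A)\<^sup>2" by simp
  then have "0 \<le> 4 * \<kappa> * (\<kappa> * s\<^sup>2 - A * s) + A\<^sup>2" by (simp add: power2_eq_square algebra_simps)
  then show ?thesis using k by (simp add: field_simps)
qed

lemma prox_exists:
  fixes g :: "real^'n \<Rightarrow> ereal"
  assumes pr: "proper_fun g" and lsc: "lsc_fun g" and wc: "weakly_convex \<rho> g" and g: "\<gamma> > 0" and r: "\<rho> \<ge> 0"
    and gr: "\<gamma> * \<rho> < 1" and xs: "xs \<in> prox_set g \<gamma> ys"
  shows "prox_set g \<gamma> y \<noteq> {}"
proof -
  define gx where "gx = real_of_ereal (g xs)"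
  define \<kappa> where "\<kappa> = (1 / \<gamma> - \<rho>) / 2"
  have k: "\<kappa> > 0" unfolding \<kappa>_def using g gr by (simp add: field_simps)
  define b where "b = \<rho> *\<^sub>R xs - (1 / \<gamma>) *\<^sub>R (xs - ys) - (1 / \<gamma>) *\<^sub>R y"
  define c where "c = gx + \<rho>/2 * (xs \<bullet> xs) - \<rho> * (xs \<bullet> xs) + (xs \<bullet> (xs - ys)) / \<gamma> + (y \<bullet> y) / (2 * \<gamma>)"
  define ll where "ll u = \<kappa> * (u \<bullet> u) + u \<bullet> b + c" for u
  define F where "F u = g u + ereal ((norm (u - y))\<^sup>2 / (2 * \<gamma>))" for u
  have Fl: "F u \<ge> ereal (ll u)" for u
  proof -
    have m: "g u \<ge> ereal (gx + \<rho>/2 * (xs \<bullet> xs) - \<rho>/2 * (u \<bullet> u) + \<rho> * ((u - xs) \<bullet> xs) - ((u - xs) \<bullet> (xs - ys)) / \<gamma>)"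
      using wc_minorant[OF pr wc g r xs] unfolding gx_def by blast
    have eq: "gx + \<rho>/2 * (xs \<bullet> xs) - \<rho>/2 * (u \<bullet> u) + \<rho> * ((u - xs) \<bullet> xs) - ((u - xs) \<bullet> (xs - ys)) / \<gamma> + (norm (u - y))\<^sup>2 / (2 * \<gamma>) = ll u"
      unfolding ll_def \<kappa>_def b_def c_def power2_norm_eq_inner using g
      by (simp add: inner_diff_left inner_diff_right inner_add_right inner_add_left inner_commute field_simps)
    have "ereal (ll u) = ereal (gx + \<rho>/2 * (xs \<bullet> xs) - \<rho>/2 * (u \<bullet> u) + \<rho> * ((u - xs) \<bullet> xs) - ((u - xs) \<bullet> (xs - ys)) / \<gamma>) + ereal ((norm (u - y))\<^sup>2 / (2 * \<gamma>))"
      using eq by simp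
    also have "\<dots> \<le> F u" unfolding F_def using m by (rule add_right_mono)
    finally show ?thesis .
  qed
  define A where "A = norm b"
  have lb: "ll u \<ge> \<kappa> * (norm u)\<^sup>2 - A * norm u - \<bar>c\<bar>" for u
  proof -
    have "u \<bullet> b \<ge> - (norm u * A)" unfolding A_def using Cauchy_Schwarz_ineq2[of u b] by linarith
    then show ?thesis unfolding ll_def by (simp add: power2_norm_eq_inner algebra_simps)
  qed
  define Lb where "Lb = - A\<^sup>2 / (4 * \<kappa>) - \<bar>c\<bar>"
  have Flb: "F u \<ge> ereal Lb" for u
  proof -
    have "Lb \<le> ll u" using lb[of u] quad_lower[OF k, of A "norm u"] unfolding Lb_def by linarith
    then show ?thesis using Fl[of u] by (meson ereal_less_eq(3) order_trans)
  qed
  obtain u0 where u0: "g u0 \<noteq> \<infinity>" using pr unfolding proper_fun_def by auto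
  have "g u0 \<noteq> -\<infinity>" using pr unfolding proper_fun_def by auto
  then obtain M where M: "F u0 = ereal M" using u0 unfolding F_def by (cases "g u0") auto
  define R where "R = (A + \<bar>c\<bar> + \<bar>M\<bar> + 1) / \<kappa> + 1 + norm u0"
  have A0: "A \<ge> 0" unfolding A_def by simp
  have far: "F u > ereal M" if "norm u > R" for u
  proof -
    have "norm u > (A + \<bar>c\<bar> + \<bar>M\<bar> + 1) / \<kappa> + 1" using that norm_ge_zero[of u0] unfolding R_def by linarith
    then have "\<kappa> * (norm u)\<^sup>2 - A * norm u - \<bar>c\<bar> > M" by (rule coercive_aux[OF k A0])
    then have "ll u > M" using lb[of u] by linarith
    then show ?thesis using Fl[of u] by (meson ereal_less_eq(3) less_le_trans ereal_less(2) not_le order.strict_trans1)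
  qed
  define K where "K = cball (0::real^'n) R"
  have u0K: "u0 \<in> K" unfolding K_def R_def using k A0
    by (simp add: add_nonneg_nonneg divide_nonneg_pos)
  define m where "m = (INF u\<in>K. F u)"
  have mle: "m \<le> ereal M" unfolding m_def using u0K M by (metis INF_lower)
  have mge: "m \<ge> ereal Lb" unfolding m_def using Flb by (simp add: le_INF_iff)
  obtain mr where mr: "m = ereal mr" using mle mge by (cases m) auto
  define S where "S n = K \<inter> {u. g u + ereal ((norm (u - y))\<^sup>2 / (2 * \<gamma>)) \<le> ereal (mr + 1 / (Suc n))}" for n :: nat
  have cl: "closed (S n)" for n
  proof -
    have "continuous_on UNIV (\<lambda>u. (norm (u - y))\<^sup>2 / (2 * \<gamma>))" using g by (intro continuous_intros) auto
    then have "closed {u. g u + ereal ((norm (u - y))\<^sup>2 / (2 * \<gamma>)) \<le> ereal (mr + 1 / (Suc n))}"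
      by (rule lsc_sublevel_closed[OF lsc])
    then show ?thesis unfolding S_def K_def by (intro closed_Int closed_cball)
  qed
  have ne: "S n \<noteq> {}" for n
  proof -
    have "m < ereal (mr + 1 / (Suc n))" unfolding mr by simp
    then obtain u where "u \<in> K" "F u < ereal (mr + 1 / (Suc n))" unfolding m_def by (auto simp: INF_less_iff)
    then show ?thesis unfolding S_def F_def by auto
  qed
  have mono: "S n \<subseteq> S k" if "k \<le> n" for k n
  proof -
    have "1 / real (Suc n) \<le> 1 / real (Suc k)" using that by (simp add: frac_le)
    then show ?thesis unfolding S_def by (auto intro: order_trans)
  qed
  have bd: "bounded (S 0)" unfolding S_def K_def by (meson bounded_Int bounded_cball)
  obtain a where a: "\<And>n. a \<in> S n" using bounded_closed_nest[of S, OF cl ne mono bd] by blast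
  have aK: "a \<in> K" using a[of 0] unfolding S_def by auto
  have Fa: "F a \<le> m"
  proof (rule ccontr)
    assume "\<not> F a \<le> m"
    then have lt: "ereal mr < F a" unfolding mr by simp
    have "F a \<le> ereal (mr + 1)" using a[of 0] unfolding S_def F_def by simp
    then obtain fa where fa: "F a = ereal fa" using lt by (cases "F a") auto
    then have "fa > mr" using lt by simp
    then obtain n :: nat where n: "1 / real (Suc n) < fa - mr"
      by (metis diff_gt_0_iff_gt nat_approx_posE)
    have "F a \<le> ereal (mr + 1 / (Suc n))" using a[of n] unfolding S_def F_def by simp
    then show False using n fa by simp
  qed
  have "a \<in> prox_set g \<gamma> y"
    unfolding prox_set_def
  proof (clarify)
    fix u
    show "g a + ereal ((norm (a - y))\<^sup>2 / (2 * \<gamma>)) \<le> g u + ereal ((norm (u - y))\<^sup>2 / (2 * \<gamma>))"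
    proof (cases "u \<in> K")
      case True
      then have "m \<le> F u" unfolding m_def by (rule INF_lower)
      then show ?thesis using Fa unfolding F_def by simp
    next
      case False
      then have "norm u > R" unfolding K_def by simp
      then have "F u > ereal M" by (rule far)
      then show ?thesis using Fa mle unfolding F_def by simp
    qed
  qed
  then show ?thesis by blast
qed


lemma prox_set_le:
  assumes "p \<in> prox_set g \<gamma> y" "g p = ereal a" "g u = ereal b"
  shows "a + ((p - y) \<bullet> (p - y)) / (2 * \<gamma>) \<le> b + ((u - y) \<bullet> (u - y)) / (2 * \<gamma>)"
proof -
  have "g p + ereal ((norm (p - y))\<^sup>2 / (2 * \<gamma>)) \<le> g u + ereal ((norm (u - y))\<^sup>2 / (2 * \<gamma>))"
    using assms(1) unfolding prox_set_def by blast
  then show ?thesis using assms(2,3) by (simp add: power2_norm_eq_inner)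
qed

lemma prox_unique:
  fixes g :: "real^'n \<Rightarrow> ereal"
  assumes pr: "proper_fun g" and wc: "weakly_convex \<rho> g" and g: "\<gamma> > 0"
    and gr: "\<gamma> * \<rho> < 1" and p1: "p1 \<in> prox_set g \<gamma> y" and p2: "p2 \<in> prox_set g \<gamma> y"
  shows "p1 = p2"
proof -
  obtain a1 where a1: "g p1 = ereal a1" using prox_set_finite[OF pr p1] by (cases "g p1") auto
  obtain a2 where a2: "g p2 = ereal a2" using prox_set_finite[OF pr p2] by (cases "g p2") auto
  define mid where "mid = (1 - 1/2) *\<^sub>R p1 + (1/2) *\<^sub>R p2"
  have cv: "g mid + ereal (\<rho> / 2 * (norm mid)\<^sup>2)
          \<le> ereal (1 - 1/2) * (g p1 + ereal (\<rho> / 2 * (norm p1)\<^sup>2)) + ereal (1/2) * (g p2 + ereal (\<rho> / 2 * (norm p2)\<^sup>2))"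
    using wc[unfolded weakly_convex_def econvex_def, rule_format, of "1/2" p1 p2] unfolding mid_def by simp
  have "g mid \<noteq> \<infinity>" using cv a1 a2 by auto
  moreover have "g mid \<noteq> -\<infinity>" using pr unfolding proper_fun_def by auto
  ultimately obtain am where am: "g mid = ereal am" by (cases "g mid") auto
  have c: "am + \<rho> / 2 * (mid \<bullet> mid) \<le> (1/2) * (a1 + \<rho> / 2 * (p1 \<bullet> p1)) + (1/2) * (a2 + \<rho> / 2 * (p2 \<bullet> p2))"
    using cv unfolding am a1 a2 by (simp add: power2_norm_eq_inner)
  have o1: "a1 + ((p1 - y) \<bullet> (p1 - y)) / (2 * \<gamma>) \<le> a2 + ((p2 - y) \<bullet> (p2 - y)) / (2 * \<gamma>)"
    using prox_set_le[OF p1 a1 a2] .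
  have o2: "a2 + ((p2 - y) \<bullet> (p2 - y)) / (2 * \<gamma>) \<le> a1 + ((p1 - y) \<bullet> (p1 - y)) / (2 * \<gamma>)"
    using prox_set_le[OF p2 a2 a1] .
  have o3: "a1 + ((p1 - y) \<bullet> (p1 - y)) / (2 * \<gamma>) \<le> am + ((mid - y) \<bullet> (mid - y)) / (2 * \<gamma>)"
    using prox_set_le[OF p1 a1 am] .
  define d where "d = p1 - p2"
  have i1: "mid \<bullet> mid = (p1 \<bullet> p1) / 2 + (p2 \<bullet> p2) / 2 - (d \<bullet> d) / 4"
    unfolding mid_def d_def by (simp add: inner_add_left inner_add_right inner_diff_left inner_diff_right inner_commute field_simps)
  have i2: "(mid - y) \<bullet> (mid - y) = ((p1 - y) \<bullet> (p1 - y)) / 2 + ((p2 - y) \<bullet> (p2 - y)) / 2 - (d \<bullet> d) / 4"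
    unfolding mid_def d_def by (simp add: inner_add_left inner_add_right inner_diff_left inner_diff_right inner_commute field_simps)
  define m where "m = a1 + ((p1 - y) \<bullet> (p1 - y)) / (2 * \<gamma>)"
  have "am \<le> (a1 + a2) / 2 + \<rho> / 8 * (d \<bullet> d)"
    using c unfolding i1 by (simp add: field_simps)
  then have "m \<le> (a1 + a2) / 2 + \<rho> / 8 * (d \<bullet> d) + (((p1 - y) \<bullet> (p1 - y)) / 2 + ((p2 - y) \<bullet> (p2 - y)) / 2 - (d \<bullet> d) / 4) / (2 * \<gamma>)"
    using o3 unfolding i2 m_def using g by (simp add: divide_right_mono)
  also have "\<dots> = (a1 + ((p1 - y) \<bullet> (p1 - y)) / (2 * \<gamma>)) / 2 + (a2 + ((p2 - y) \<bullet> (p2 - y)) / (2 * \<gamma>)) / 2 - (1 / \<gamma> - \<rho>) / 8 * (d \<bullet> d)"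
    using g by (simp add: field_simps)
  finally have fin: "m \<le> m / 2 + (a2 + ((p2 - y) \<bullet> (p2 - y)) / (2 * \<gamma>)) / 2 - (1 / \<gamma> - \<rho>) / 8 * (d \<bullet> d)"
    unfolding m_def .
  have gen: "P \<le> P/2 + Q/2 - Z \<Longrightarrow> Q \<le> P \<Longrightarrow> Z \<le> 0" for P Q Z :: real by linarith
  have "(1 / \<gamma> - \<rho>) / 8 * (d \<bullet> d) \<le> 0" using gen[OF fin] o2 unfolding m_def by blast
  moreover have "(1 / \<gamma> - \<rho>) / 8 > 0" using g gr by (simp add: field_simps)
  ultimately have "d \<bullet> d \<le> 0" by (simp add: mult_le_0_iff)
  then show ?thesis unfolding d_def using inner_ge_zero[of "p1 - p2"] by (metis antisym inner_eq_zero_iff right_minus_eq)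
qed

definition menv :: "('n::finite vec \<Rightarrow> ereal) \<Rightarrow> real \<Rightarrow> 'n vec \<Rightarrow> real" where
  "menv g \<gamma> y = real_of_ereal (g (prox g \<gamma> y)) + (norm (prox g \<gamma> y - y))\<^sup>2 / (2 * \<gamma>)"

lemma prox_in:
  assumes "prox_set g \<gamma> y \<noteq> {}"
  shows "prox g \<gamma> y \<in> prox_set g \<gamma> y"
  using assms unfolding prox_def by (metis ex_in_conv someI_ex)

lemma fbe_formula:
  fixes f :: "real^'n \<Rightarrow> real"
  assumes pr: "proper_fun g" and g: "\<gamma> > 0"
    and ex: "prox_set g \<gamma> (x - \<gamma> *\<^sub>R G x) \<noteq> {}"
  shows "fbe f G g \<gamma> x = f x - \<gamma> / 2 * (G x \<bullet> G x) + menv g \<gamma> (x - \<gamma> *\<^sub>R G x)"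
proof -
  define y where "y = x - \<gamma> *\<^sub>R G x"
  define p where "p = prox g \<gamma> y"
  have p: "p \<in> prox_set g \<gamma> y" unfolding p_def y_def using prox_in[OF ex] .
  obtain gp where gp: "g p = ereal gp" using prox_set_finite[OF pr p] by (cases "g p") auto
  define c where "c = f x - \<gamma> / 2 * (G x \<bullet> G x)"
  have key: "f x + G x \<bullet> (u - x) + (norm (u - x))\<^sup>2 / (2 * \<gamma>) = c + (norm (u - y))\<^sup>2 / (2 * \<gamma>)" for u
    unfolding c_def y_def power2_norm_eq_inner using g
    by (simp add: inner_diff_left inner_diff_right inner_add_left inner_add_right inner_commute field_simps)
  define E where "E u = ereal (f x + G x \<bullet> (u - x)) + g u + ereal ((norm (u - x))\<^sup>2 / (2 * \<gamma>))" for u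
  have Eeq: "E u = ereal c + (g u + ereal ((norm (u - y))\<^sup>2 / (2 * \<gamma>)))" for u
  proof (cases "g u")
    case (real r)
    then show ?thesis unfolding E_def using key[of u] by (simp add: algebra_simps)
  next
    case PInf then show ?thesis unfolding E_def by simp
  next
    case MInf then show ?thesis using pr unfolding proper_fun_def by auto
  qed
  have le: "E p \<le> E u" for u
    unfolding Eeq using p unfolding prox_set_def by (auto intro: add_left_mono)
  have "(INF u. E u) = E p"
    by (rule antisym) (auto intro: INF_lower le INF_greatest)
  then have "fbe f G g \<gamma> x = real_of_ereal (E p)" unfolding fbe_def E_def by simp
  also have "\<dots> = c + (gp + (norm (p - y))\<^sup>2 / (2 * \<gamma>))" unfolding Eeq gp by simp
  also have "\<dots> = f x - \<gamma> / 2 * (G x \<bullet> G x) + menv g \<gamma> (x - \<gamma> *\<^sub>R G x)"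
    unfolding menv_def c_def p_def[symmetric] y_def[symmetric] using gp by simp
  finally show ?thesis .
qed

lemma menv_deriv:
  fixes g :: "real^'n \<Rightarrow> ereal"
  assumes pr: "proper_fun g" and g: "\<gamma> > 0"
    and ex: "\<And>y. prox_set g \<gamma> y \<noteq> {}"
    and cont: "isCont (prox g \<gamma>) y"
  shows "(menv g \<gamma> has_derivative (\<lambda>h. ((1 / \<gamma>) *\<^sub>R (y - prox g \<gamma> y)) \<bullet> h)) (at y)"
proof -
  define P where "P = prox g \<gamma>"
  have Pin: "P z \<in> prox_set g \<gamma> z" for z unfolding P_def by (rule prox_in[OF ex])
  define gv where "gv z = real_of_ereal (g (P z))" for z
  have gv: "g (P z) = ereal (gv z)" for z
    using prox_set_finite[OF pr Pin[of z]] unfolding gv_def by (cases "g (P z)") auto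
  have me: "menv g \<gamma> z = gv z + ((P z - z) \<bullet> (P z - z)) / (2 * \<gamma>)" for z
    unfolding menv_def gv_def P_def by (simp add: power2_norm_eq_inner)
  have up: "menv g \<gamma> z - menv g \<gamma> y - ((1 / \<gamma>) *\<^sub>R (y - P y)) \<bullet> (z - y) \<le> (norm (z - y))\<^sup>2 / (2 * \<gamma>)" for z
  proof -
    have "gv z + ((P z - z) \<bullet> (P z - z)) / (2 * \<gamma>) \<le> gv y + ((P y - z) \<bullet> (P y - z)) / (2 * \<gamma>)"
      using prox_set_le[OF Pin[of z] gv gv] .
    moreover have "((P y - z) \<bullet> (P y - z)) / (2 * \<gamma>) = ((P y - y) \<bullet> (P y - y)) / (2 * \<gamma>) + ((1 / \<gamma>) *\<^sub>R (y - P y)) \<bullet> (z - y) + (norm (z - y))\<^sup>2 / (2 * \<gamma>)"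
      using g unfolding power2_norm_eq_inner
      by (simp add: inner_diff_left inner_diff_right inner_commute field_simps)
    ultimately show ?thesis unfolding me by linarith
  qed
  have lo: "menv g \<gamma> z - menv g \<gamma> y - ((1 / \<gamma>) *\<^sub>R (y - P y)) \<bullet> (z - y) \<ge> ((1 / \<gamma>) *\<^sub>R (P y - P z)) \<bullet> (z - y)" for z
  proof -
    have "gv y + ((P y - y) \<bullet> (P y - y)) / (2 * \<gamma>) \<le> gv z + ((P z - y) \<bullet> (P z - y)) / (2 * \<gamma>)"
      using prox_set_le[OF Pin[of y] gv gv] .
    moreover have "((P z - y) \<bullet> (P z - y)) / (2 * \<gamma>) = ((P z - z) \<bullet> (P z - z)) / (2 * \<gamma>) - ((1 / \<gamma>) *\<^sub>R (y - P z)) \<bullet> (z - y) - (norm (z - y))\<^sup>2 / (2 * \<gamma>)"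
      using g unfolding power2_norm_eq_inner
      by (simp add: inner_diff_left inner_diff_right inner_commute field_simps)
    moreover have "(norm (z - y))\<^sup>2 / (2 * \<gamma>) \<ge> 0" using g by simp
    moreover have "((1 / \<gamma>) *\<^sub>R (P y - P z)) \<bullet> (z - y) = ((1 / \<gamma>) *\<^sub>R (y - P z)) \<bullet> (z - y) - ((1 / \<gamma>) *\<^sub>R (y - P y)) \<bullet> (z - y)"
      by (simp add: inner_diff_left algebra_simps)
    ultimately show ?thesis unfolding me by linarith
  qed
  show ?thesis
    unfolding has_derivative_at_alt
  proof (intro conjI allI impI)
    show "bounded_linear (\<lambda>h. ((1 / \<gamma>) *\<^sub>R (y - prox g \<gamma> y)) \<bullet> h)" by (rule bounded_linear_inner_right)
    fix e :: real assume e: "e > 0"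
    have "eventually (\<lambda>z. dist (P z) (P y) < e * \<gamma> / 2) (at y)"
      using cont e g unfolding isCont_def P_def by (intro tendstoD) auto
    then obtain d1 where d1: "d1 > 0" and hd1: "\<And>z. z \<noteq> y \<Longrightarrow> dist z y < d1 \<Longrightarrow> dist (P z) (P y) < e * \<gamma> / 2"
      unfolding eventually_at by blast
    define d where "d = min d1 (e * \<gamma>)"
    have d: "d > 0" unfolding d_def using d1 e g by simp
    show "\<exists>d>0. \<forall>z. norm (z - y) < d \<longrightarrow> norm (menv g \<gamma> z - menv g \<gamma> y - ((1 / \<gamma>) *\<^sub>R (y - prox g \<gamma> y)) \<bullet> (z - y)) \<le> e * norm (z - y)"
    proof (intro exI[of _ d] conjI allI impI d)
      fix z assume z: "norm (z - y) < d"
      show "norm (menv g \<gamma> z - menv g \<gamma> y - ((1 / \<gamma>) *\<^sub>R (y - prox g \<gamma> y)) \<bullet> (z - y)) \<le> e * norm (z - y)"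
      proof (cases "z = y")
        case True then show ?thesis by simp
      next
        case False
        have pz: "norm (P y - P z) \<le> e * \<gamma> / 2"
          using hd1[OF False] z unfolding d_def by (simp add: dist_norm norm_minus_commute)
        have A: "(norm (z - y))\<^sup>2 / (2 * \<gamma>) \<le> e * norm (z - y)"
        proof -
          have "norm (z - y) \<le> e * \<gamma>" using z unfolding d_def by simp
          then have "norm (z - y) * norm (z - y) \<le> (e * \<gamma>) * norm (z - y)" by (simp add: mult_right_mono)
          moreover have "0 \<le> (e * \<gamma>) * norm (z - y)" using g e by simp
          ultimately have "(norm (z - y))\<^sup>2 \<le> e * norm (z - y) * (2 * \<gamma>)"
            by (simp add: power2_eq_square algebra_simps)
          then show ?thesis using g by (simp add: pos_divide_le_eq)
        qed
        have B: "- (e * norm (z - y)) \<le> ((1 / \<gamma>) *\<^sub>R (P y - P z)) \<bullet> (z - y)"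
        proof -
          have "\<bar>((1 / \<gamma>) *\<^sub>R (P y - P z)) \<bullet> (z - y)\<bar> \<le> norm ((1 / \<gamma>) *\<^sub>R (P y - P z)) * norm (z - y)"
            by (rule Cauchy_Schwarz_ineq2)
          also have "\<dots> = (norm (P y - P z) / \<gamma>) * norm (z - y)" using g by simp
          also have "\<dots> \<le> (e / 2) * norm (z - y)"
            using pz g by (intro mult_right_mono) (auto simp: field_simps)
          also have "\<dots> \<le> e * norm (z - y)" using e by (simp add: mult_right_mono)
          finally show ?thesis by linarith
        qed
        show ?thesis using up[of z] lo[of z] A B unfolding P_def by (simp add: abs_le_iff)
      qed
    qed
  qed
qed

lemma grad_eqI:
  fixes F :: "real^'n \<Rightarrow> real"
  assumes "(F has_derivative (\<lambda>h. v \<bullet> h)) (at x)"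
  shows "grad F x = v"
  unfolding grad_def
proof (rule the_equality)
  show "(F has_derivative (\<lambda>h. v \<bullet> h)) (at x)" by fact
  fix w assume "(F has_derivative (\<lambda>h. w \<bullet> h)) (at x)"
  then have "(\<lambda>h. w \<bullet> h) = (\<lambda>h. v \<bullet> h)" using has_derivative_unique assms by blast
  then have "w \<bullet> (w - v) = v \<bullet> (w - v)" by metis
  then have "(w - v) \<bullet> (w - v) = 0" by (simp add: inner_diff_left)
  then show "w = v" by simp
qed

lemma matrix_blinfun:
  fixes L :: "(real^'n) \<Rightarrow>\<^sub>L (real^'m)"
  shows "matrix (blinfun_apply L) *v h = blinfun_apply L h"
  using matrix_vector_mul(3)[OF blinfun.bounded_linear_right[of L]] by metis

locale ntractx =
  fixes f :: "real^'n \<Rightarrow> real" and G :: "real^'n \<Rightarrow> real^'n" and H :: "real^'n \<Rightarrow> real^'n^'n"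
    and g :: "real^'n \<Rightarrow> ereal" and \<rho> \<gamma> :: real and xstar :: "real^'n"
    and U :: "(real^'n) set" and H' :: "real^'n \<Rightarrow> (real^'n) \<Rightarrow>\<^sub>L (real^'n^'n)"
    and V :: "(real^'n) set" and D :: "real^'n \<Rightarrow> (real^'n) \<Rightarrow>\<^sub>L (real^'n)"
  assumes grad_f: "\<And>x. (f has_derivative (\<lambda>h. G x \<bullet> h)) (at x)"
    and hess_f: "\<And>x. (G has_derivative (\<lambda>h. H x *v h)) (at x)"
    and pr: "proper_fun g" and lsc: "lsc_fun g" and wc: "weakly_convex \<rho> g"
    and rho: "\<rho> > 0" and gam: "\<gamma> > 0" and gr: "\<gamma> * \<rho> < 1"
    and crit: "xstar \<in> prox_set g \<gamma> (xstar - \<gamma> *\<^sub>R G xstar)"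
    and U: "open U" "xstar \<in> U" "continuous_on U H'" "\<And>y. y \<in> U \<Longrightarrow> (H has_derivative blinfun_apply (H' y)) (at y)"
    and V: "open V" "xstar - \<gamma> *\<^sub>R G xstar \<in> V" "continuous_on V D" "\<And>y. y \<in> V \<Longrightarrow> (prox g \<gamma> has_derivative blinfun_apply (D y)) (at y)"
begin

definition "yy x = x - \<gamma> *\<^sub>R G x"
definition "T x = prox g \<gamma> (yy x)"
definition "R x = (1 / \<gamma>) *\<^sub>R (x - T x)"
definition "Q x = ntra_Q H \<gamma> x"
definition "Pm x = matrix (blinfun_apply (D (yy x)))"
definition "BB x = ntra_B H \<gamma> x (Pm x)"
definition "Psi x = Q x *v R x"
definition "phg = fbe f G g \<gamma>"

lemma prox_ex: "prox_set g \<gamma> y \<noteq> {}"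
  using prox_exists[OF pr lsc wc gam _ gr crit] rho by simp

lemma prox_in': "prox g \<gamma> y \<in> prox_set g \<gamma> y"
  by (rule prox_in[OF prox_ex])

lemma T_star: "T xstar = xstar"
  unfolding T_def yy_def using prox_unique[OF pr wc gam gr prox_in' crit] .

lemma R_star: "R xstar = 0"
  unfolding R_def using T_star by simp

lemma H_sym: "u \<bullet> (H x *v v) = v \<bullet> (H x *v u)"
  by (rule schwarz_sym[of 1 x f G]) (use grad_f hess_f in auto)

lemma G_cont: "isCont G x"
  using hess_f has_derivative_continuous by blast

lemma H_cont: "x \<in> U \<Longrightarrow> isCont H x"
  using U(4) has_derivative_continuous by blast

lemma prox_cont: "y \<in> V \<Longrightarrow> isCont (prox g \<gamma>) y"
  using V(4) has_derivative_continuous by blast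

lemma yy_deriv: "(yy has_derivative (\<lambda>h. h - \<gamma> *\<^sub>R (H x *v h))) (at x)"
  unfolding yy_def by (auto intro!: derivative_eq_intros hess_f)

lemma yy_cont: "isCont yy x"
  using yy_deriv has_derivative_continuous by blast

lemma menv_d: "y \<in> V \<Longrightarrow> (menv g \<gamma> has_derivative (\<lambda>h. ((1 / \<gamma>) *\<^sub>R (y - prox g \<gamma> y)) \<bullet> h)) (at y)"
  by (rule menv_deriv[OF pr gam prox_ex prox_cont])

lemma D_sym:
  assumes y: "y \<in> V"
  shows "u \<bullet> (D y v) = v \<bullet> (D y u)"
proof -
  obtain r where r: "r > 0" "ball y r \<subseteq> V" using V(1) y open_contains_ball by blast
  define A where "A = (1 / \<gamma>) *\<^sub>R (mat 1 - matrix (blinfun_apply (D y)))"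
  have dA: "((\<lambda>z. (1 / \<gamma>) *\<^sub>R (z - prox g \<gamma> z)) has_derivative (\<lambda>h. A *v h)) (at y)"
  proof -
    have "((\<lambda>z. (1 / \<gamma>) *\<^sub>R (z - prox g \<gamma> z)) has_derivative (\<lambda>h. (1 / \<gamma>) *\<^sub>R (h - D y h))) (at y)"
      by (auto intro!: derivative_eq_intros V(4) y)
    moreover have "(\<lambda>h. (1 / \<gamma>) *\<^sub>R (h - D y h)) = (\<lambda>h. A *v h)"
      unfolding A_def by (auto simp: matrix_vector_mult_diff_rdistrib scaleR_matrix_vector_assoc[symmetric] matrix_blinfun)
    ultimately show ?thesis by simp
  qed
  have "u \<bullet> (A *v v) = v \<bullet> (A *v u)"
    by (rule schwarz_sym[of r y "menv g \<gamma>"]) (use r menv_d dA in auto)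
  then show ?thesis unfolding A_def
    using gam by (simp add: matrix_vector_mult_diff_rdistrib scaleR_matrix_vector_assoc[symmetric] matrix_blinfun inner_diff_right inner_commute)
qed

end

lemma bb_mv: "bounded_bilinear (\<lambda>(A::real^'n^'m) (x::real^'n). A *v x)"
proof
  fix a a' :: "real^'n^'m" and b b' :: "real^'n" and r :: real
  show "(a + a') *v b = a *v b + a' *v b" by (simp add: matrix_vector_mult_add_rdistrib)
  show "a *v (b + b') = a *v b + a *v b'" by (simp add: matrix_vector_right_distrib)
  show "(r *\<^sub>R a) *v b = r *\<^sub>R (a *v b)" by (simp add: scaleR_matrix_vector_assoc)
  show "a *v (r *\<^sub>R b) = r *\<^sub>R (a *v b)" by (simp add: matrix_vector_mult_scaleR)
  show "\<exists>K. \<forall>a b. norm ((a::real^'n^'m) *v (b::real^'n)) \<le> norm a * norm b * K"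
    by (rule exI[of _ 1]) (simp add: norm_mv_le)
qed

context ntractx begin

definition "W = U \<inter> yy -` V"

lemma W_open: "open W"
proof -
  have "open (yy -` V)" using V(1) yy_cont by (intro continuous_open_vimage) auto
  then show ?thesis unfolding W_def using U(1) by auto
qed

lemma star_W: "xstar \<in> W"
  unfolding W_def yy_def using U(2) V(2) by auto

lemma phg_formula: "phg x = f x - \<gamma> / 2 * (G x \<bullet> G x) + menv g \<gamma> (yy x)"
  unfolding phg_def yy_def by (rule fbe_formula[OF pr gam prox_ex])

lemma Q_mv: "Q x *v v = v - \<gamma> *\<^sub>R (H x *v v)"
  unfolding Q_def ntra_Q_def by (simp add: matrix_vector_mult_diff_rdistrib scaleR_matrix_vector_assoc)

lemma phg_deriv:
  assumes x: "yy x \<in> V"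
  shows "(phg has_derivative (\<lambda>h. Psi x \<bullet> h)) (at x)"
proof -
  have md: "((\<lambda>x. menv g \<gamma> (yy x)) has_derivative (\<lambda>h. ((1 / \<gamma>) *\<^sub>R (yy x - prox g \<gamma> (yy x))) \<bullet> (h - \<gamma> *\<^sub>R (H x *v h)))) (at x)"
    using has_derivative_compose[OF yy_deriv menv_d[OF x]] by simp
  have "((\<lambda>x. f x - \<gamma> / 2 * (G x \<bullet> G x) + menv g \<gamma> (yy x)) has_derivative
     (\<lambda>h. G x \<bullet> h - \<gamma> / 2 * (G x \<bullet> (H x *v h) + (H x *v h) \<bullet> G x) + ((1 / \<gamma>) *\<^sub>R (yy x - prox g \<gamma> (yy x))) \<bullet> (h - \<gamma> *\<^sub>R (H x *v h)))) (at x)"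
    by (intro derivative_intros grad_f hess_f md)
  moreover have "(\<lambda>h. G x \<bullet> h - \<gamma> / 2 * (G x \<bullet> (H x *v h) + (H x *v h) \<bullet> G x) + ((1 / \<gamma>) *\<^sub>R (yy x - prox g \<gamma> (yy x))) \<bullet> (h - \<gamma> *\<^sub>R (H x *v h)))
      = (\<lambda>h. Psi x \<bullet> h)"
  proof
    fix h
    have s: "R x \<bullet> (H x *v h) = h \<bullet> (H x *v R x)" by (rule H_sym)
    have e: "(1 / \<gamma>) *\<^sub>R (yy x - prox g \<gamma> (yy x)) = R x - G x"
      unfolding R_def T_def yy_def using gam by (simp add: algebra_simps)
    show "G x \<bullet> h - \<gamma> / 2 * (G x \<bullet> (H x *v h) + (H x *v h) \<bullet> G x) + ((1 / \<gamma>) *\<^sub>R (yy x - prox g \<gamma> (yy x))) \<bullet> (h - \<gamma> *\<^sub>R (H x *v h))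
      = Psi x \<bullet> h"
      unfolding e Psi_def Q_mv using s
      by (simp add: inner_diff_left inner_diff_right inner_commute algebra_simps)
  qed
  ultimately show ?thesis unfolding phg_formula[abs_def] by simp
qed

lemma grad_phg: "yy x \<in> V \<Longrightarrow> grad phg x = Psi x"
  by (rule grad_eqI[OF phg_deriv])

lemma BB_mv: "BB x *v h = Q x *v ((1 / \<gamma>) *\<^sub>R (h - D (yy x) (Q x *v h)))"
proof -
  have "BB x *v h = (1 / \<gamma>) *\<^sub>R (Q x *v (h - Pm x *v (Q x *v h)))"
    unfolding BB_def ntra_B_def Q_def[symmetric]
    by (simp add: scaleR_matrix_vector_assoc[symmetric] matrix_vector_mul_assoc[symmetric] matrix_vector_mult_diff_distrib matrix_vector_mult_diff_rdistrib)
  also have "\<dots> = Q x *v ((1 / \<gamma>) *\<^sub>R (h - D (yy x) (Q x *v h)))"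
    unfolding Pm_def matrix_blinfun by (simp add: matrix_vector_mult_scaleR)
  finally show ?thesis .
qed

definition "Psi' x h = (- \<gamma> *\<^sub>R blinfun_apply (H' x) h) *v R x + BB x *v h"

lemma Psi_deriv:
  assumes x: "x \<in> W"
  shows "(Psi has_derivative Psi' x) (at x)"
proof -
  have xU: "x \<in> U" and xV: "yy x \<in> V" using x unfolding W_def by auto
  have dQ: "(Q has_derivative (\<lambda>h. - \<gamma> *\<^sub>R blinfun_apply (H' x) h)) (at x)"
  proof -
    have "((\<lambda>x. mat 1 - \<gamma> *\<^sub>R H x) has_derivative (\<lambda>h. 0 - \<gamma> *\<^sub>R blinfun_apply (H' x) h)) (at x)"
      by (intro derivative_intros U(4) xU)
    then show ?thesis unfolding Q_def[abs_def] ntra_Q_def by simp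
  qed
  have dT: "(T has_derivative (\<lambda>h. D (yy x) (h - \<gamma> *\<^sub>R (H x *v h)))) (at x)"
    unfolding T_def[abs_def] using has_derivative_compose[OF yy_deriv V(4)[OF xV]] by simp
  have dR: "(R has_derivative (\<lambda>h. (1 / \<gamma>) *\<^sub>R (h - D (yy x) (h - \<gamma> *\<^sub>R (H x *v h))))) (at x)"
    unfolding R_def[abs_def] by (intro derivative_intros dT)
  have "(Psi has_derivative (\<lambda>h. Q x *v ((1 / \<gamma>) *\<^sub>R (h - D (yy x) (h - \<gamma> *\<^sub>R (H x *v h)))) + (- \<gamma> *\<^sub>R blinfun_apply (H' x) h) *v R x)) (at x)"
    unfolding Psi_def[abs_def] using bounded_bilinear.FDERIV[OF bb_mv dQ dR] by simp
  moreover have "(\<lambda>h. Q x *v ((1 / \<gamma>) *\<^sub>R (h - D (yy x) (h - \<gamma> *\<^sub>R (H x *v h)))) + (- \<gamma> *\<^sub>R blinfun_apply (H' x) h) *v R x) = Psi' x"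
    unfolding Psi'_def BB_mv Q_mv[symmetric] by (auto simp: algebra_simps)
  ultimately show ?thesis by simp
qed

end

lemma tendsto_matmul:
  fixes A :: "'a \<Rightarrow> real^'n^'m" and B :: "'a \<Rightarrow> real^'k^'n"
  assumes "(A \<longlongrightarrow> a) F" "(B \<longlongrightarrow> b) F"
  shows "((\<lambda>x. A x ** B x) \<longlongrightarrow> a ** b) F"
  unfolding matrix_matrix_mult_def by (intro tendsto_intros assms)

lemma tendsto_matrix_blinfun:
  fixes L :: "'a \<Rightarrow> (real^'n) \<Rightarrow>\<^sub>L (real^'m)"
  assumes "(L \<longlongrightarrow> l) F"
  shows "((\<lambda>x. matrix (blinfun_apply (L x))) \<longlongrightarrow> matrix (blinfun_apply l)) F"
  unfolding matrix_def by (intro tendsto_intros blinfun.tendsto assms)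

lemma seg_in_ball:
  fixes x d c :: "real^'n"
  assumes "x \<in> ball c r" "x + d \<in> ball c r" "0 \<le> t" "t \<le> 1"
  shows "x + t *\<^sub>R d \<in> ball c r"
proof -
  have "x + t *\<^sub>R d = (1 - t) *\<^sub>R x + t *\<^sub>R (x + d)" by (simp add: scaleR_diff_left scaleR_add_right)
  moreover have "(1 - t) *\<^sub>R x + t *\<^sub>R (x + d) \<in> ball c r"
    using convex_ball[of c r] assms unfolding convex_alt by auto
  ultimately show ?thesis by simp
qed

context ntractx begin

lemma BB_cont: "isCont BB xstar"
proof -
  have xU: "xstar \<in> U" by (rule U(2))
  have Hc: "(H \<longlongrightarrow> H xstar) (at xstar)" using H_cont[OF xU] unfolding isCont_def .
  have Qc: "(Q \<longlongrightarrow> Q xstar) (at xstar)"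
    unfolding Q_def[abs_def] ntra_Q_def by (intro tendsto_intros Hc)
  have Dc: "isCont D (yy xstar)"
    using V(1,3) V(2) unfolding yy_def by (simp add: continuous_on_eq_continuous_at)
  have "((\<lambda>x. D (yy x)) \<longlongrightarrow> D (yy xstar)) (at xstar)"
    using isCont_tendsto_compose[OF Dc] yy_cont unfolding isCont_def by blast
  then have Pc: "(Pm \<longlongrightarrow> Pm xstar) (at xstar)"
    unfolding Pm_def[abs_def] by (rule tendsto_matrix_blinfun)
  show ?thesis unfolding isCont_def BB_def[abs_def] ntra_B_def Q_def[symmetric]
    by (intro tendsto_intros tendsto_matmul Qc Pc)
qed

lemma R_cont: "isCont R xstar"
proof -
  have "isCont (prox g \<gamma>) (yy xstar)" using prox_cont V(2) unfolding yy_def by simp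
  then have "isCont T xstar" unfolding T_def[abs_def] using yy_cont isCont_o2 by blast
  then show ?thesis unfolding R_def[abs_def] by (intro continuous_intros)
qed

lemma H'_cont: "isCont H' xstar"
  using U(1,2,3) by (simp add: continuous_on_eq_continuous_at)

lemma Psi'_star: "Psi' xstar h = BB xstar *v h"
  unfolding Psi'_def R_star by simp

lemma Psi'_close:
  assumes e: "e > 0"
  shows "\<exists>r>0. \<forall>z. norm (z - xstar) < r \<longrightarrow> onorm (\<lambda>h. Psi' z h - Psi' xstar h) \<le> e"
proof -
  obtain r1 where r1: "r1 > 0" and h1: "\<And>z. dist z xstar < r1 \<Longrightarrow> dist (BB z) (BB xstar) < e / 2"
    using BB_cont e unfolding continuous_at_eps_delta by (metis half_gt_zero)
  obtain r2 where r2: "r2 > 0" and h2: "\<And>z. dist z xstar < r2 \<Longrightarrow> dist (H' z) (H' xstar) < 1"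
    using H'_cont unfolding continuous_at_eps_delta by (metis zero_less_one)
  define K where "K = \<gamma> * (norm (H' xstar) + 1)"
  have K: "K > 0" unfolding K_def using gam by (simp add: add_nonneg_pos)
  have eK: "e / (2 * K) > 0" using e K by simp
  obtain r3 where r3: "r3 > 0" and h3: "\<And>z. dist z xstar < r3 \<Longrightarrow> dist (R z) (R xstar) < e / (2 * K)"
    using R_cont eK unfolding continuous_at_eps_delta by blast
  define r where "r = min r1 (min r2 r3)"
  show ?thesis
  proof (intro exI[of _ r] conjI allI impI)
    show "r > 0" unfolding r_def using r1 r2 r3 by simp
    fix z assume z: "norm (z - xstar) < r"
    have b1: "norm (BB z - BB xstar) < e / 2" using h1[of z] z unfolding r_def by (simp add: dist_norm)
    have b2: "norm (H' z) \<le> norm (H' xstar) + 1"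
      using h2[of z] z norm_triangle_ineq2[of "H' z" "H' xstar"] unfolding r_def by (simp add: dist_norm)
    have b3: "norm (R z) \<le> e / (2 * K)" using h3[of z] z R_star unfolding r_def by (simp add: dist_norm)
    show "onorm (\<lambda>h. Psi' z h - Psi' xstar h) \<le> e"
    proof (rule onorm_le)
      fix h
      have eq: "Psi' z h - Psi' xstar h = (- \<gamma> *\<^sub>R blinfun_apply (H' z) h) *v R z + (BB z - BB xstar) *v h"
        unfolding Psi'_def R_star by (simp add: matrix_vector_mult_diff_rdistrib)
      have n1: "norm ((- \<gamma> *\<^sub>R blinfun_apply (H' z) h) *v R z) \<le> e / 2 * norm h"
      proof -
        have "norm ((- \<gamma> *\<^sub>R blinfun_apply (H' z) h) *v R z) \<le> norm (- \<gamma> *\<^sub>R blinfun_apply (H' z) h) * norm (R z)"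
          by (rule norm_mv_le)
        also have "\<dots> \<le> (\<gamma> * (norm (H' z) * norm h)) * norm (R z)"
          using gam norm_blinfun[of "H' z" h] by (intro mult_right_mono) (auto intro: mult_left_mono)
        also have "\<dots> \<le> (\<gamma> * ((norm (H' xstar) + 1) * norm h)) * (e / (2 * K))"
          using gam b2 b3 by (intro mult_mono mult_left_mono mult_right_mono) auto
        also have "\<dots> = e / 2 * norm h"
        proof -
          have a: "norm (H' xstar) + 1 \<noteq> 0" by (smt (verit) norm_ge_zero)
          have gen: "\<gamma> * (a * n) * (e / (2 * (\<gamma> * a))) = e / 2 * n" if "a \<noteq> 0" for a n :: real
            using that gam by (simp add: field_simps)
          show ?thesis unfolding K_def using gen[OF a] .
        qed
        finally show ?thesis .
      qed
      have n2: "norm ((BB z - BB xstar) *v h) \<le> e / 2 * norm h"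
      proof -
        have "norm (BB z - BB xstar) * norm h \<le> e / 2 * norm h" using b1 by (intro mult_right_mono) auto
        then show ?thesis using norm_mv_le[of "BB z - BB xstar" h] by linarith
      qed
      show "norm (Psi' z h - Psi' xstar h) \<le> e * norm h"
        unfolding eq using n1 n2 norm_triangle_ineq[of "(- \<gamma> *\<^sub>R blinfun_apply (H' z) h) *v R z" "(BB z - BB xstar) *v h"]
        by linarith
    qed
  qed
qed

end

context ntractx begin

lemma taylor:
  assumes e: "e > 0"
  shows "\<exists>r>0. ball xstar r \<subseteq> W \<and> (\<forall>x d. x \<in> ball xstar r \<longrightarrow> x + d \<in> ball xstar r \<longrightarrow>
     \<bar>phg (x + d) - phg x - Psi x \<bullet> d - 1/2 * (d \<bullet> (BB x *v d))\<bar> \<le> e * (norm d)\<^sup>2)"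
proof -
  obtain r0 where r0: "r0 > 0" "ball xstar r0 \<subseteq> W" using W_open star_W open_contains_ball by blast
  have e4: "e / 4 > 0" using e by simp
  obtain r1 where r1: "r1 > 0" and h1: "\<And>z. norm (z - xstar) < r1 \<Longrightarrow> onorm (\<lambda>h. Psi' z h - Psi' xstar h) \<le> e / 4"
    using Psi'_close[OF e4] by blast
  obtain r2 where r2: "r2 > 0" and h2: "\<And>z. dist z xstar < r2 \<Longrightarrow> dist (BB z) (BB xstar) < e / 4"
    using BB_cont e4 unfolding continuous_at_eps_delta by blast
  define r where "r = min r0 (min r1 r2)"
  have r: "r > 0" unfolding r_def using r0 r1 r2 by simp
  have sub: "ball xstar r \<subseteq> W" using r0 unfolding r_def by auto
  show ?thesis
  proof (intro exI[of _ r] conjI allI impI r sub)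
    fix x d assume x: "x \<in> ball xstar r" and xd: "x + d \<in> ball xstar r"
    define S where "S = ball xstar r"
    have seg: "x + t *\<^sub>R d \<in> S" if "0 \<le> t" "t \<le> 1" for t
      unfolding S_def using seg_in_ball[OF x xd that] .
    have inW: "z \<in> S \<Longrightarrow> z \<in> W" for z using sub unfolding S_def by auto
    have zV: "z \<in> S \<Longrightarrow> yy z \<in> V" for z using inW unfolding W_def by auto
    have lin: "norm (Psi (x + t *\<^sub>R d) - Psi x - Psi' xstar (t *\<^sub>R d)) \<le> norm (t *\<^sub>R d) * (e / 4)"
      if t: "0 \<le> t" "t \<le> 1" for t
    proof -
      have "norm (Psi (x + t *\<^sub>R d) - Psi x - Psi' xstar ((x + t *\<^sub>R d) - x)) \<le> norm ((x + t *\<^sub>R d) - x) * (e / 4)"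
      proof (rule differentiable_bound_linearization[where S = S and f' = Psi'])
        fix s :: real assume "s \<in> {0..1}"
        then have "0 \<le> s * t" "s * t \<le> 1" using t by (auto simp: mult_le_one)
        then have "x + (s * t) *\<^sub>R d \<in> S" by (rule seg)
        then show "x + s *\<^sub>R (x + t *\<^sub>R d - x) \<in> S" by (simp add: scaleR_scaleR)
      next
        fix z assume "z \<in> S"
        then show "(Psi has_derivative Psi' z) (at z within S)"
          using Psi_deriv inW has_derivative_at_withinI by blast
      next
        fix z assume "z \<in> S"
        then have "norm (z - xstar) < r1" unfolding S_def r_def by (simp add: dist_norm norm_minus_commute)
        then have "onorm (\<lambda>h. Psi' z h - Psi' xstar h) \<le> e / 4" by (rule h1)
        then show "onorm (Psi' z - Psi' xstar) \<le> e / 4" by (simp add: fun_diff_def)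
      next
        show "xstar \<in> S" unfolding S_def using r by simp
      qed
      then show ?thesis by simp
    qed
    have bbz: "norm (BB xstar - BB x) \<le> e / 4"
    proof -
      have "dist x xstar < r2" using x unfolding r_def by (simp add: dist_commute)
      then show ?thesis using h2[of x] by (simp add: dist_norm norm_minus_commute)
    qed
    define s where "s t = phg (x + t *\<^sub>R d) - t * (Psi x \<bullet> d) - t\<^sup>2 / 2 * (d \<bullet> (BB x *v d))" for t
    define s' where "s' t = Psi (x + t *\<^sub>R d) \<bullet> d - Psi x \<bullet> d - t * (d \<bullet> (BB x *v d))" for t
    have sd: "(s has_real_derivative s' t) (at t)" if "0 \<le> t" "t \<le> 1" for t
    proof -
      have z: "x + t *\<^sub>R d \<in> S" by (rule seg[OF that])
      have l: "((\<lambda>t. x + t *\<^sub>R d) has_derivative (\<lambda>h. h *\<^sub>R d)) (at t)"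
        by (auto intro!: derivative_eq_intros)
      have c: "((\<lambda>t. phg (x + t *\<^sub>R d)) has_derivative (\<lambda>h. Psi (x + t *\<^sub>R d) \<bullet> (h *\<^sub>R d))) (at t)"
        using has_derivative_compose[OF l phg_deriv[OF zV[OF z]]] by simp
      have "(s has_derivative (\<lambda>h. Psi (x + t *\<^sub>R d) \<bullet> (h *\<^sub>R d) - h * (Psi x \<bullet> d) - (2 * t * h) / 2 * (d \<bullet> (BB x *v d)))) (at t)"
        unfolding s_def[abs_def] by (auto intro!: derivative_eq_intros c simp: power2_eq_square)
      moreover have "(\<lambda>h. Psi (x + t *\<^sub>R d) \<bullet> (h *\<^sub>R d) - h * (Psi x \<bullet> d) - (2 * t * h) / 2 * (d \<bullet> (BB x *v d))) = (\<lambda>h. s' t * h)"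
        unfolding s'_def by (auto simp: algebra_simps)
      ultimately show ?thesis by (simp add: has_field_derivative_def)
    qed
    obtain \<xi> where xi: "0 < \<xi>" "\<xi> < 1" and mvt: "s 1 - s 0 = (1 - 0) * s' \<xi>"
      using MVT2[of 0 1 s s'] sd by auto
    have bound: "\<bar>s' \<xi>\<bar> \<le> e / 2 * (norm d)\<^sup>2"
    proof -
      have eq: "s' \<xi> = (Psi (x + \<xi> *\<^sub>R d) - Psi x - Psi' xstar (\<xi> *\<^sub>R d)) \<bullet> d + \<xi> * (d \<bullet> ((BB xstar - BB x) *v d))"
        unfolding s'_def Psi'_star by (simp add: inner_diff_left inner_diff_right matrix_vector_mult_diff_rdistrib matrix_vector_mult_scaleR inner_commute algebra_simps)
      have a1: "\<bar>(Psi (x + \<xi> *\<^sub>R d) - Psi x - Psi' xstar (\<xi> *\<^sub>R d)) \<bullet> d\<bar> \<le> e / 4 * (norm d)\<^sup>2"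
      proof -
        have "\<bar>(Psi (x + \<xi> *\<^sub>R d) - Psi x - Psi' xstar (\<xi> *\<^sub>R d)) \<bullet> d\<bar> \<le> norm (Psi (x + \<xi> *\<^sub>R d) - Psi x - Psi' xstar (\<xi> *\<^sub>R d)) * norm d"
          by (rule Cauchy_Schwarz_ineq2)
        also have "\<dots> \<le> (norm (\<xi> *\<^sub>R d) * (e / 4)) * norm d"
          using lin[of \<xi>] xi by (intro mult_right_mono) auto
        also have "\<dots> \<le> (norm d * (e / 4)) * norm d"
          using xi e by (intro mult_right_mono) (auto simp: mult_left_le_one_le)
        finally show ?thesis by (simp add: power2_eq_square algebra_simps)
      qed
      have a2: "\<bar>\<xi> * (d \<bullet> ((BB xstar - BB x) *v d))\<bar> \<le> e / 4 * (norm d)\<^sup>2"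
      proof -
        have "\<bar>d \<bullet> ((BB xstar - BB x) *v d)\<bar> \<le> norm d * norm ((BB xstar - BB x) *v d)"
          by (rule Cauchy_Schwarz_ineq2)
        also have "\<dots> \<le> norm d * (norm (BB xstar - BB x) * norm d)"
          by (intro mult_left_mono norm_mv_le) auto
        also have "\<dots> \<le> norm d * (e / 4 * norm d)"
          using bbz by (intro mult_left_mono mult_right_mono) auto
        finally have "\<bar>d \<bullet> ((BB xstar - BB x) *v d)\<bar> \<le> e / 4 * (norm d)\<^sup>2" by (simp add: power2_eq_square algebra_simps)
        moreover have "\<bar>\<xi>\<bar> \<le> 1" using xi by simp
        ultimately have "\<bar>\<xi>\<bar> * \<bar>d \<bullet> ((BB xstar - BB x) *v d)\<bar> \<le> 1 * (e / 4 * (norm d)\<^sup>2)"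
          by (intro mult_mono) auto
        then show ?thesis by (simp add: abs_mult)
      qed
      have t: "\<bar>(Psi (x + \<xi> *\<^sub>R d) - Psi x - Psi' xstar (\<xi> *\<^sub>R d)) \<bullet> d + \<xi> * (d \<bullet> ((BB xstar - BB x) *v d))\<bar>
         \<le> \<bar>(Psi (x + \<xi> *\<^sub>R d) - Psi x - Psi' xstar (\<xi> *\<^sub>R d)) \<bullet> d\<bar> + \<bar>\<xi> * (d \<bullet> ((BB xstar - BB x) *v d))\<bar>"
        by (rule abs_triangle_ineq)
      have h: "e / 4 * (norm d)\<^sup>2 + e / 4 * (norm d)\<^sup>2 = e / 2 * (norm d)\<^sup>2" by simp
      show ?thesis unfolding eq using a1 a2 t h by linarith
    qed
    have "phg (x + d) - phg x - Psi x \<bullet> d - 1/2 * (d \<bullet> (BB x *v d)) = s 1 - s 0"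
      unfolding s_def by simp
    also have "\<bar>\<dots>\<bar> \<le> e / 2 * (norm d)\<^sup>2" using mvt bound by simp
    also have "\<dots> \<le> e * (norm d)\<^sup>2" using e by (simp add: mult_right_mono)
    finally show "\<bar>phg (x + d) - phg x - Psi x \<bullet> d - 1/2 * (d \<bullet> (BB x *v d))\<bar> \<le> e * (norm d)\<^sup>2" .
  qed
qed

end

lemma fbe_inf:
  fixes f :: "real^'n \<Rightarrow> real"
  assumes pr: "proper_fun g" and g: "\<gamma> > 0"
    and ex: "prox_set g \<gamma> (x - \<gamma> *\<^sub>R G x) \<noteq> {}"
  shows "(INF u. ereal (f x + G x \<bullet> (u - x)) + g u + ereal ((norm (u - x))\<^sup>2 / (2 * \<gamma>))) = ereal (fbe f G g \<gamma> x)"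
proof -
  define y where "y = x - \<gamma> *\<^sub>R G x"
  define p where "p = prox g \<gamma> y"
  have p: "p \<in> prox_set g \<gamma> y" unfolding p_def y_def using prox_in[OF ex] .
  obtain gp where gp: "g p = ereal gp" using prox_set_finite[OF pr p] by (cases "g p") auto
  define c where "c = f x - \<gamma> / 2 * (G x \<bullet> G x)"
  have key: "f x + G x \<bullet> (u - x) + (norm (u - x))\<^sup>2 / (2 * \<gamma>) = c + (norm (u - y))\<^sup>2 / (2 * \<gamma>)" for u
    unfolding c_def y_def power2_norm_eq_inner using g
    by (simp add: inner_diff_left inner_diff_right inner_add_left inner_add_right inner_commute field_simps)
  define E where "E u = ereal (f x + G x \<bullet> (u - x)) + g u + ereal ((norm (u - x))\<^sup>2 / (2 * \<gamma>))" for u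
  have Eeq: "E u = ereal c + (g u + ereal ((norm (u - y))\<^sup>2 / (2 * \<gamma>)))" for u
  proof (cases "g u")
    case (real r)
    then show ?thesis unfolding E_def using key[of u] by (simp add: algebra_simps)
  next
    case PInf then show ?thesis unfolding E_def by simp
  next
    case MInf then show ?thesis using pr unfolding proper_fun_def by auto
  qed
  have le: "E p \<le> E u" for u
    unfolding Eeq using p unfolding prox_set_def by (auto intro: add_left_mono)
  have I: "(INF u. E u) = E p"
    by (rule antisym) (auto intro: INF_lower le INF_greatest)
  have fin: "E p = ereal (c + (gp + (norm (p - y))\<^sup>2 / (2 * \<gamma>)))" unfolding Eeq gp by simp
  have "fbe f G g \<gamma> x = real_of_ereal (E p)" unfolding fbe_def E_def[symmetric] I by simp
  then show ?thesis unfolding E_def[symmetric] I using fin by simp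
qed

context ntractx begin

lemma phg_le: "ereal (phg z) \<le> ereal (f z) + g z"
proof -
  have "ereal (phg z) = (INF u. ereal (f z + G z \<bullet> (u - z)) + g u + ereal ((norm (u - z))\<^sup>2 / (2 * \<gamma>)))"
    unfolding phg_def using fbe_inf[OF pr gam prox_ex] by simp
  also have "\<dots> \<le> ereal (f z + G z \<bullet> (z - z)) + g z + ereal ((norm (z - z))\<^sup>2 / (2 * \<gamma>))"
    by (rule INF_lower) simp
  also have "\<dots> = ereal (f z) + g z" by simp
  finally show ?thesis .
qed

lemma g_star_fin: "g xstar = ereal (real_of_ereal (g xstar))"
  using prox_set_finite[OF pr crit] by (cases "g xstar") auto

lemma phg_star: "phg xstar = f xstar + real_of_ereal (g xstar)"
proof -
  have p: "prox g \<gamma> (yy xstar) = xstar" using T_star unfolding T_def .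
  have "phg xstar = f xstar - \<gamma> / 2 * (G xstar \<bullet> G xstar) + menv g \<gamma> (yy xstar)" by (rule phg_formula)
  also have "menv g \<gamma> (yy xstar) = real_of_ereal (g xstar) + (norm (\<gamma> *\<^sub>R G xstar))\<^sup>2 / (2 * \<gamma>)"
    unfolding menv_def p unfolding yy_def by simp
  also have "(norm (\<gamma> *\<^sub>R G xstar))\<^sup>2 / (2 * \<gamma>) = \<gamma> / 2 * (G xstar \<bullet> G xstar)"
  proof -
    have "(norm (\<gamma> *\<^sub>R G xstar))\<^sup>2 = \<gamma>\<^sup>2 * (G xstar \<bullet> G xstar)"
      by (simp add: power_mult_distrib dot_square_norm)
    then show ?thesis using gam by (simp add: power2_eq_square field_simps)
  qed
  finally show ?thesis by simp
qed

lemma Psi_star: "Psi xstar = 0"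
  unfolding Psi_def R_star by simp

lemma Q_sym: "u \<bullet> (Q x *v v) = v \<bullet> (Q x *v u)"
  unfolding Q_mv using H_sym[of u x v] by (simp add: inner_diff_right inner_commute)

lemma BB_sym:
  assumes x: "yy x \<in> V"
  shows "u \<bullet> (BB x *v v) = v \<bullet> (BB x *v u)"
proof -
  have a: "u \<bullet> (BB x *v v) = (1 / \<gamma>) * ((Q x *v u) \<bullet> v - (Q x *v u) \<bullet> D (yy x) (Q x *v v))"
    unfolding BB_mv using Q_sym[of u x] by (simp add: Q_sym[of u x] inner_diff_right inner_commute)
  have b: "v \<bullet> (BB x *v u) = (1 / \<gamma>) * ((Q x *v v) \<bullet> u - (Q x *v v) \<bullet> D (yy x) (Q x *v u))"
    unfolding BB_mv using Q_sym[of v x] by (simp add: Q_sym[of v x] inner_diff_right inner_commute)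
  have "(Q x *v u) \<bullet> v = (Q x *v v) \<bullet> u" using Q_sym[of v x u] by (simp add: inner_commute)
  moreover have "(Q x *v u) \<bullet> D (yy x) (Q x *v v) = (Q x *v v) \<bullet> D (yy x) (Q x *v u)" by (rule D_sym[OF x])
  ultimately show ?thesis unfolding a b by simp
qed

lemma clarke_single:
  assumes y: "y \<in> V"
  shows "clarke_jac (prox g \<gamma>) y = {matrix (blinfun_apply (D y))}"
proof -
  have "bouligand_jac (prox g \<gamma>) y = {matrix (blinfun_apply (D y))}"
  proof (intro equalityI subsetI)
    fix M assume "M \<in> bouligand_jac (prox g \<gamma>) y"
    then obtain xs Ms where xs: "xs \<longlonglongrightarrow> y" and Ms: "Ms \<longlonglongrightarrow> M"
      and dM: "\<And>k. (prox g \<gamma> has_derivative (\<lambda>h. Ms k *v h)) (at (xs k))"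
      unfolding bouligand_jac_def by blast
    have "eventually (\<lambda>k. xs k \<in> V) sequentially" using xs V(1) y by (rule topological_tendstoD)
    then have ev: "eventually (\<lambda>k. Ms k = matrix (blinfun_apply (D (xs k)))) sequentially"
    proof eventually_elim
      case (elim k)
      have "(\<lambda>h. Ms k *v h) = blinfun_apply (D (xs k))" using has_derivative_unique[OF dM V(4)[OF elim]] .
      then show ?case by (metis matrix_of_matrix_vector_mul)
    qed
    have Dc: "isCont D y" using V(1,3) y by (simp add: continuous_on_eq_continuous_at)
    have "(\<lambda>k. D (xs k)) \<longlonglongrightarrow> D y" using isCont_tendsto_compose[OF Dc xs] .
    then have "(\<lambda>k. matrix (blinfun_apply (D (xs k)))) \<longlonglongrightarrow> matrix (blinfun_apply (D y))"
      by (rule tendsto_matrix_blinfun)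
    then have "Ms \<longlonglongrightarrow> matrix (blinfun_apply (D y))" using ev by (rule Lim_transform_eventually[OF _ eventually_mono]) auto
    then show "M \<in> {matrix (blinfun_apply (D y))}" using Ms LIMSEQ_unique by auto
  next
    fix M assume "M \<in> {matrix (blinfun_apply (D y))}"
    then have M: "M = matrix (blinfun_apply (D y))" by simp
    have "(prox g \<gamma> has_derivative (\<lambda>h. M *v h)) (at y)" unfolding M matrix_blinfun using V(4)[OF y] by simp
    then show "M \<in> bouligand_jac (prox g \<gamma>) y" unfolding bouligand_jac_def
      by (intro CollectI exI[of _ "\<lambda>_. y"] exI[of _ "\<lambda>_. M"]) auto
  qed
  then show ?thesis unfolding clarke_jac_def by simp
qed

end

context ntractx begin

lemma model_diff:
  "ntra_model f G g \<gamma> z B 0 - ntra_model f G g \<gamma> z B dd = - (grad phg z \<bullet> dd) - 1/2 * (dd \<bullet> (B *v dd))"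
  unfolding ntra_model_def phg_def by simp

lemma Psi_cont: "isCont Psi xstar"
  using Psi_deriv[OF star_W] has_derivative_continuous by blast

lemma psd:
  assumes run: "ntra_run f G H g \<gamma> \<delta>0 \<mu>1 \<mu>2 c1 c2 c3 x d \<delta> P"
    and par: "0 < \<delta>0" "0 < \<mu>1" "\<mu>1 < \<mu>2" "\<mu>2 < 1" "0 < c1" "c1 < c2" "c2 < 1" "1 < c3"
    and conv: "x \<longlonglongrightarrow> xstar"
    and b2: "0 < \<beta>2"
    and bcond: "\<forall>k. lambda_min (ntra_B H \<gamma> (x k) (P k)) < 0 \<longrightarrow>
          ntra_model f G g \<gamma> (x k) (ntra_B H \<gamma> (x k) (P k)) 0
            - ntra_model f G g \<gamma> (x k) (ntra_B H \<gamma> (x k) (P k)) (d k)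
          \<ge> \<beta>2 * (- lambda_min (ntra_B H \<gamma> (x k) (P k))) * (\<delta> k)\<^sup>2"
  shows "v \<bullet> (BB xstar *v v) \<ge> 0"
proof (rule ccontr)
  assume "\<not> v \<bullet> (BB xstar *v v) \<ge> 0"
  then have neg: "v \<bullet> (BB xstar *v v) < 0" by simp
  then have v0: "v \<noteq> 0" by auto
  then have vv: "v \<bullet> v > 0" by simp
  define q where "q = v \<bullet> (BB xstar *v v) / (v \<bullet> v)"
  have q: "q < 0" unfolding q_def using neg vv by (simp add: divide_neg_pos)
  define c where "c = - q / 2"
  have c: "c > 0" unfolding c_def using q by simp
  define rr where "rr k = (phg (x k) - phg (x k + d k)) /
      (ntra_model f G g \<gamma> (x k) (ntra_B H \<gamma> (x k) (P k)) 0 - ntra_model f G g \<gamma> (x k) (ntra_B H \<gamma> (x k) (P k)) (d k))" for k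
  have st: "P k \<in> clarke_jac (prox g \<gamma>) (x k - \<gamma> *\<^sub>R G (x k)) \<and> norm (d k) \<le> \<delta> k \<and>
     x (Suc k) = (if rr k < \<mu>1 then x k else x k + d k) \<and>
     \<delta> (Suc k) = (if rr k < \<mu>1 then c1 * \<delta> k else if rr k < \<mu>2 then c2 * \<delta> k else c3 * \<delta> k)" for k
    using run unfolding ntra_run_def Let_def rr_def phg_def by blast
  have dpos: "\<delta> k > 0" for k
  proof (induction k)
    case 0 then show ?case using run par unfolding ntra_run_def by simp
  next
    case (Suc k) then show ?case using st[of k] par by auto
  qed
  define pred where "pred k = - (Psi (x k) \<bullet> d k) - 1/2 * (d k \<bullet> (BB (x k) *v d k))" for k
  define act where "act k = phg (x k) - phg (x k + d k)" for k
  define \<epsilon> where "\<epsilon> = \<beta>2 * c * (1 - \<mu>2) / 2"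
  have eps: "\<epsilon> > 0" unfolding \<epsilon>_def using b2 c par by simp
  obtain rT where rT: "rT > 0" "ball xstar rT \<subseteq> W" and tay: "\<And>z dd. z \<in> ball xstar rT \<Longrightarrow> z + dd \<in> ball xstar rT \<Longrightarrow>
     \<bar>phg (z + dd) - phg z - Psi z \<bullet> dd - 1/2 * (dd \<bullet> (BB z *v dd))\<bar> \<le> \<epsilon> * (norm dd)\<^sup>2"
    using taylor[OF eps] by blast
  have ev1: "eventually (\<lambda>k. x k \<in> ball xstar rT) sequentially"
    using conv rT(1) by (intro topological_tendstoD) auto
  have dx: "(\<lambda>k. x (Suc k) - x k) \<longlonglongrightarrow> 0"
    using tendsto_diff[OF LIMSEQ_Suc[OF conv] conv] by simp
  have ev2: "eventually (\<lambda>k. norm (x (Suc k) - x k) < rT / 2) sequentially"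
  proof -
    have "(\<lambda>k. norm (x (Suc k) - x k)) \<longlonglongrightarrow> 0" using tendsto_norm_zero[OF dx] .
    moreover have "(0::real) < rT / 2" using rT(1) by simp
    ultimately show ?thesis by (rule order_tendstoD(2))
  qed
  have BBx: "(\<lambda>k. BB (x k)) \<longlonglongrightarrow> BB xstar" using isCont_tendsto_compose[OF BB_cont conv] .
  have ray: "(\<lambda>k. v \<bullet> (BB (x k) *v v) / (v \<bullet> v)) \<longlonglongrightarrow> q"
  proof -
    have mv: "(\<lambda>k. BB (x k) *v v) \<longlonglongrightarrow> BB xstar *v v"
      using bounded_bilinear.tendsto[OF bb_mv BBx tendsto_const] by simp
    show ?thesis unfolding q_def by (intro tendsto_intros mv) (use vv in auto)
  qed
  have ev3: "eventually (\<lambda>k. v \<bullet> (BB (x k) *v v) / (v \<bullet> v) < - c) sequentially"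
  proof -
    have "q < - c" unfolding c_def using q by simp
    with ray show ?thesis by (rule order_tendstoD(2))
  qed
  have ev4: "eventually (\<lambda>k. x k \<in> ball xstar (rT / 2)) sequentially"
    using conv rT(1) by (intro topological_tendstoD) auto
  obtain K1 where K1: "\<And>k. k \<ge> K1 \<Longrightarrow> x k \<in> ball xstar (rT / 2) \<and> norm (x (Suc k) - x k) < rT / 2 \<and>
        v \<bullet> (BB (x k) *v v) / (v \<bullet> v) < - c"
    using eventually_conj[OF ev4 eventually_conj[OF ev2 ev3]] unfolding eventually_sequentially by blast
  have inW: "k \<ge> K1 \<Longrightarrow> x k \<in> W" for k
  proof -
    assume "k \<ge> K1"
    then have "dist xstar (x k) < rT / 2" using K1[of k] by auto
    then have "x k \<in> ball xstar rT" using rT(1) by simp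
    then show ?thesis using rT(2) by auto
  qed
  have inV: "k \<ge> K1 \<Longrightarrow> yy (x k) \<in> V" for k using inW[of k] unfolding W_def by auto
  have Bk: "k \<ge> K1 \<Longrightarrow> ntra_B H \<gamma> (x k) (P k) = BB (x k)" for k
  proof -
    assume k: "k \<ge> K1"
    have "P k \<in> clarke_jac (prox g \<gamma>) (yy (x k))" using st[of k] unfolding yy_def by simp
    then have "P k = Pm (x k)" unfolding clarke_single[OF inV[OF k]] Pm_def by simp
    then show ?thesis unfolding BB_def by simp
  qed
  have lmin: "k \<ge> K1 \<Longrightarrow> lambda_min (BB (x k)) < - c" for k
    using lambda_min_le[OF BB_sym[OF inV] v0, of k] K1[of k] by linarith
  have predlb: "k \<ge> K1 \<Longrightarrow> pred k \<ge> \<beta>2 * c * (\<delta> k)\<^sup>2" for k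
  proof -
    assume k: "k \<ge> K1"
    have l: "lambda_min (ntra_B H \<gamma> (x k) (P k)) < 0" using lmin[OF k] c Bk[OF k] by simp
    have "pred k \<ge> \<beta>2 * (- lambda_min (BB (x k))) * (\<delta> k)\<^sup>2"
      using bcond[rule_format, OF l] unfolding model_diff Bk[OF k] grad_phg[OF inV[OF k]] pred_def by simp
    moreover have "\<beta>2 * (- lambda_min (BB (x k))) * (\<delta> k)\<^sup>2 \<ge> \<beta>2 * c * (\<delta> k)\<^sup>2"
      using lmin[OF k] b2 by (intro mult_right_mono mult_left_mono) auto
    ultimately show ?thesis by linarith
  qed
  have rrk: "k \<ge> K1 \<Longrightarrow> rr k = act k / pred k" for k
    unfolding rr_def act_def pred_def model_diff Bk grad_phg[OF inV] by simp
  \<comment> \<open>Case A: small steps are very successful\<close>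
  have caseA: "k \<ge> K1 \<Longrightarrow> norm (d k) < rT / 2 \<Longrightarrow> x (Suc k) = x k + d k \<and> \<delta> (Suc k) = c3 * \<delta> k" for k
  proof -
    assume k: "k \<ge> K1" and dk: "norm (d k) < rT / 2"
    have dk2: "dist xstar (x k) < rT / 2" using K1[OF k] by simp
    have xb: "x k \<in> ball xstar rT" using dk2 rT(1) by simp
    have xdb: "x k + d k \<in> ball xstar rT"
    proof -
      have e: "dist (x k) (x k + d k) = norm (d k)" by (simp add: dist_norm)
      have "dist xstar (x k + d k) \<le> dist xstar (x k) + dist (x k) (x k + d k)" by (rule dist_triangle)
      then have "dist xstar (x k + d k) \<le> dist xstar (x k) + norm (d k)" unfolding e .
      then show ?thesis using dk2 dk by simp
    qed
    have pp: "pred k \<ge> \<beta>2 * c * (\<delta> k)\<^sup>2" by (rule predlb[OF k])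
    have "\<beta>2 * c * (\<delta> k)\<^sup>2 > 0" using b2 c dpos[of k] by simp
    then have ppos: "pred k > 0" using pp by linarith
    have t: "\<bar>act k - pred k\<bar> \<le> \<epsilon> * (norm (d k))\<^sup>2"
      using tay[OF xb xdb] unfolding act_def pred_def by (simp add: abs_minus_commute algebra_simps)
    have "(norm (d k))\<^sup>2 \<le> (\<delta> k)\<^sup>2" using st[of k] by (simp add: power_mono)
    then have "\<epsilon> * (norm (d k))\<^sup>2 \<le> \<epsilon> * (\<delta> k)\<^sup>2" using eps by (simp add: mult_left_mono)
    also have "\<dots> = (1 - \<mu>2) / 2 * (\<beta>2 * c * (\<delta> k)\<^sup>2)" unfolding \<epsilon>_def by simp
    also have "\<dots> \<le> (1 - \<mu>2) / 2 * pred k" using pp par by (intro mult_left_mono) auto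
    finally have "act k \<ge> pred k - (1 - \<mu>2) / 2 * pred k" using t by linarith
    then have "act k / pred k \<ge> (pred k - (1 - \<mu>2) / 2 * pred k) / pred k"
      using ppos by (simp add: divide_right_mono)
    also have "(pred k - (1 - \<mu>2) / 2 * pred k) / pred k = (1 + \<mu>2) / 2"
      using ppos by (simp add: field_simps)
    finally have "rr k \<ge> (1 + \<mu>2) / 2" unfolding rrk[OF k] .
    then have "\<not> rr k < \<mu>1" "\<not> rr k < \<mu>2" using par by auto
    then show ?thesis using st[of k] by simp
  qed
  have caseB: "k \<ge> K1 \<Longrightarrow> norm (d k) \<ge> rT / 2 \<Longrightarrow> x (Suc k) = x k \<and> \<delta> (Suc k) = c1 * \<delta> k \<and> \<delta> k \<ge> rT / 2" for k
  proof -
    assume k: "k \<ge> K1" and dk: "norm (d k) \<ge> rT / 2"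
    have "rr k < \<mu>1"
    proof (rule ccontr)
      assume "\<not> rr k < \<mu>1"
      then have "x (Suc k) = x k + d k" using st[of k] by simp
      then show False using K1[OF k] dk by simp
    qed
    then show ?thesis using st[of k] dk by simp
  qed
  define \<eta> where "\<eta> = min (\<delta> K1) (c1 * (rT / 2))"
  have eta: "\<eta> > 0" unfolding \<eta>_def using dpos par rT by simp
  have dlb: "\<delta> (K1 + n) \<ge> \<eta>" for n
  proof (induction n)
    case 0 then show ?case unfolding \<eta>_def by simp
  next
    case (Suc n)
    have k: "K1 + n \<ge> K1" by simp
    show ?case
    proof (cases "norm (d (K1 + n)) < rT / 2")
      case True
      then have "\<delta> (Suc (K1 + n)) = c3 * \<delta> (K1 + n)" using caseA[OF k] by simp
      also have "\<dots> \<ge> \<delta> (K1 + n)" using par dpos[of "K1 + n"] by simp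
      finally show ?thesis using Suc by simp
    next
      case False
      then have h: "\<delta> (Suc (K1 + n)) = c1 * \<delta> (K1 + n)" "\<delta> (K1 + n) \<ge> rT / 2" using caseB[OF k] by auto
      have "c1 * (rT / 2) \<le> c1 * \<delta> (K1 + n)" using h(2) par by (simp add: mult_left_mono)
      then show ?thesis using h(1) unfolding \<eta>_def by simp
    qed
  qed
  have dlb': "k \<ge> K1 \<Longrightarrow> \<delta> k \<ge> \<eta>" for k using dlb[of "k - K1"] by simp
  define PP where "PP = \<beta>2 * c * \<eta>\<^sup>2"
  have Pi: "PP > 0" unfolding PP_def using b2 c eta by simp
  have predPi: "k \<ge> K1 \<Longrightarrow> pred k \<ge> PP" for k
  proof -
    assume k: "k \<ge> K1"
    have "\<eta>\<^sup>2 \<le> (\<delta> k)\<^sup>2" using dlb'[OF k] eta by (simp add: power_mono)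
    then have "PP \<le> \<beta>2 * c * (\<delta> k)\<^sup>2" unfolding PP_def using b2 c by (simp add: mult_left_mono)
    then show ?thesis using predlb[OF k] by linarith
  qed
  define Mb where "Mb = norm (BB xstar) + 1"
  have Mb: "Mb > 0" unfolding Mb_def by (simp add: add_nonneg_pos)
  define \<zeta> where "\<zeta> = min 1 (PP / (Mb + 1))"
  have zeta: "\<zeta> > 0" "\<zeta> \<le> 1" "\<zeta> \<le> PP / (Mb + 1)" unfolding \<zeta>_def using Pi Mb by auto
  have Psix: "(\<lambda>k. Psi (x k)) \<longlonglongrightarrow> 0" using isCont_tendsto_compose[OF Psi_cont conv] Psi_star by simp
  have ev5: "eventually (\<lambda>k. norm (Psi (x k)) < PP / 2) sequentially"
  proof -
    have "(\<lambda>k. norm (Psi (x k))) \<longlonglongrightarrow> 0" using tendsto_norm_zero[OF Psix] .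
    moreover have "(0::real) < PP / 2" using Pi by simp
    ultimately show ?thesis by (rule order_tendstoD(2))
  qed
  have ev6: "eventually (\<lambda>k. norm (BB (x k)) < Mb) sequentially"
  proof -
    have "(\<lambda>k. norm (BB (x k))) \<longlonglongrightarrow> norm (BB xstar)" using tendsto_norm[OF BBx] .
    moreover have "norm (BB xstar) < Mb" unfolding Mb_def by simp
    ultimately show ?thesis by (rule order_tendstoD(2))
  qed
  have ev7: "eventually (\<lambda>k. norm (x (Suc k) - x k) < \<zeta>) sequentially"
  proof -
    have "(\<lambda>k. norm (x (Suc k) - x k)) \<longlonglongrightarrow> 0" using tendsto_norm_zero[OF dx] .
    then show ?thesis using zeta(1) by (rule order_tendstoD(2))
  qed
  obtain K2 where K2: "\<And>k. k \<ge> K2 \<Longrightarrow> norm (Psi (x k)) < PP / 2 \<and> norm (BB (x k)) < Mb \<and> norm (x (Suc k) - x k) < \<zeta>"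
    using eventually_conj[OF ev5 eventually_conj[OF ev6 ev7]] unfolding eventually_sequentially by blast
  define K where "K = max K1 K2"
  have dbig: "k \<ge> K \<Longrightarrow> norm (d k) \<ge> \<zeta>" for k
  proof (rule ccontr)
    assume k: "k \<ge> K" and "\<not> norm (d k) \<ge> \<zeta>"
    then have dk: "norm (d k) < \<zeta>" by simp
    have k1: "k \<ge> K1" and k2: "k \<ge> K2" using k unfolding K_def by auto
    have "pred k \<le> \<bar>Psi (x k) \<bullet> d k\<bar> + 1/2 * \<bar>d k \<bullet> (BB (x k) *v d k)\<bar>" unfolding pred_def by linarith
    also have "\<dots> \<le> norm (Psi (x k)) * norm (d k) + 1/2 * (norm (d k) * (norm (BB (x k)) * norm (d k)))"
    proof -
      have "\<bar>Psi (x k) \<bullet> d k\<bar> \<le> norm (Psi (x k)) * norm (d k)" by (rule Cauchy_Schwarz_ineq2)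
      moreover have "\<bar>d k \<bullet> (BB (x k) *v d k)\<bar> \<le> norm (d k) * (norm (BB (x k)) * norm (d k))"
        using Cauchy_Schwarz_ineq2[of "d k" "BB (x k) *v d k"] norm_mv_le[of "BB (x k)" "d k"]
        by (smt (verit) mult_left_mono norm_ge_zero)
      ultimately show ?thesis by linarith
    qed
    also have "\<dots> \<le> (PP / 2) * \<zeta> + 1/2 * (\<zeta> * (Mb * \<zeta>))"
      using K2[OF k2] dk Pi Mb zeta by (intro add_mono mult_mono mult_left_mono) (auto intro: less_imp_le)
    also have "\<dots> \<le> PP / 2 + 1/2 * (Mb * \<zeta>)"
    proof -
      have "(PP / 2) * \<zeta> \<le> PP / 2" using zeta Pi by (simp add: mult_left_le)
      moreover have "\<zeta> * (Mb * \<zeta>) \<le> 1 * (Mb * \<zeta>)" using zeta Mb by (intro mult_right_mono) auto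
      ultimately show ?thesis by simp
    qed
    also have "\<dots> < PP"
    proof -
      have "Mb * \<zeta> \<le> Mb * (PP / (Mb + 1))" using zeta Mb by (intro mult_left_mono) auto
      also have "\<dots> < PP" using Mb Pi by (simp add: field_simps)
      finally show ?thesis by simp
    qed
    finally show False using predPi[OF k1] by simp
  qed
  have rej: "k \<ge> K \<Longrightarrow> \<delta> (Suc k) = c1 * \<delta> k" for k
  proof -
    assume k: "k \<ge> K"
    have k1: "k \<ge> K1" and k2: "k \<ge> K2" using k unfolding K_def by auto
    show ?thesis
    proof (cases "norm (d k) < rT / 2")
      case True
      then have "x (Suc k) = x k + d k" using caseA[OF k1] by simp
      then have "norm (d k) < \<zeta>" using K2[OF k2] by simp
      then show ?thesis using dbig[OF k] by simp
    next
      case False then show ?thesis using caseB[OF k1] by simp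
    qed
  qed
  have geo: "\<delta> (K + n) = c1 ^ n * \<delta> K" for n
    by (induction n) (auto simp: rej)
  have "(\<lambda>n. c1 ^ n * \<delta> K) \<longlonglongrightarrow> 0 * \<delta> K"
    using par by (intro tendsto_intros LIMSEQ_power_zero) auto
  then have "(\<lambda>n. c1 ^ n * \<delta> K) \<longlonglongrightarrow> 0" by simp
  then have "eventually (\<lambda>n. c1 ^ n * \<delta> K < \<eta>) sequentially" using eta by (rule order_tendstoD(2))
  then obtain n where "c1 ^ n * \<delta> K < \<eta>" using eventually_sequentially by auto
  moreover have "\<delta> (K + n) \<ge> \<eta>" using dlb'[of "K + n"] unfolding K_def by simp
  ultimately show False using geo[of n] by simp
qed

end

context ntractx begin

lemma phi_lb:
  assumes psd: "\<And>v. v \<bullet> (BB xstar *v v) \<ge> 0" and e: "e > 0"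
  shows "\<exists>r>0. \<forall>dd. norm dd < r \<longrightarrow> ereal (f (xstar + dd)) + g (xstar + dd) \<ge> ereal (phg xstar - e * (norm dd)\<^sup>2)"
proof -
  obtain r where r: "r > 0" and tay: "\<And>z dd. z \<in> ball xstar r \<Longrightarrow> z + dd \<in> ball xstar r \<Longrightarrow>
     \<bar>phg (z + dd) - phg z - Psi z \<bullet> dd - 1/2 * (dd \<bullet> (BB z *v dd))\<bar> \<le> e * (norm dd)\<^sup>2"
    using taylor[OF e] by blast
  show ?thesis
  proof (intro exI[of _ r] conjI allI impI r)
    fix dd :: "real^'n" assume dd: "norm dd < r"
    have "xstar + dd \<in> ball xstar r" using dd by (simp add: dist_norm)
    then have t: "\<bar>phg (xstar + dd) - phg xstar - Psi xstar \<bullet> dd - 1/2 * (dd \<bullet> (BB xstar *v dd))\<bar> \<le> e * (norm dd)\<^sup>2"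
      using tay[of xstar dd] r by simp
    have "phg (xstar + dd) \<ge> phg xstar - e * (norm dd)\<^sup>2"
      using t psd[of dd] unfolding Psi_star by simp
    then have "ereal (phg xstar - e * (norm dd)\<^sup>2) \<le> ereal (phg (xstar + dd))" by simp
    also have "\<dots> \<le> ereal (f (xstar + dd)) + g (xstar + dd)" by (rule phg_le)
    finally show "ereal (f (xstar + dd)) + g (xstar + dd) \<ge> ereal (phg xstar - e * (norm dd)\<^sup>2)" .
  qed
qed

lemma phi_star: "ereal (f xstar) + g xstar = ereal (phg xstar)"
  using g_star_fin phg_star by (metis plus_ereal.simps(1))

lemma sos:
  assumes psd: "\<And>v. v \<bullet> (BB xstar *v v) \<ge> 0"
  shows "second_order_stationary (\<lambda>y. ereal (f y) + g y) xstar"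
  unfolding second_order_stationary_def
proof (intro conjI allI)
  define \<phi> where "\<phi> = (\<lambda>y. ereal (f y) + g y)"
  have fr: "0 \<in> frechet_subdiff \<phi> xstar"
    unfolding frechet_subdiff_def
  proof (intro CollectI conjI allI impI)
    show "\<bar>\<phi> xstar\<bar> \<noteq> \<infinity>" unfolding \<phi>_def phi_star by simp
    fix \<epsilon> :: real assume e: "\<epsilon> > 0"
    obtain r where r: "r > 0" and lb: "\<And>dd. norm dd < r \<Longrightarrow> ereal (f (xstar + dd)) + g (xstar + dd) \<ge> ereal (phg xstar - \<epsilon> * (norm dd)\<^sup>2)"
      using phi_lb[OF psd e] by blast
    show "\<exists>\<eta>>0. \<forall>z. norm (z - xstar) < \<eta> \<longrightarrow> \<phi> xstar + ereal (0 \<bullet> (z - xstar) - \<epsilon> * norm (z - xstar)) \<le> \<phi> z"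
    proof (intro exI[of _ "min r 1"] conjI allI impI)
      show "min r 1 > 0" using r by simp
      fix z assume z: "norm (z - xstar) < min r 1"
      have l: "\<phi> z \<ge> ereal (phg xstar - \<epsilon> * (norm (z - xstar))\<^sup>2)"
        using lb[of "z - xstar"] z unfolding \<phi>_def by simp
      have "\<epsilon> * (norm (z - xstar))\<^sup>2 \<le> \<epsilon> * norm (z - xstar)"
      proof -
        have "norm (z - xstar) * norm (z - xstar) \<le> 1 * norm (z - xstar)" using z by (intro mult_right_mono) auto
        then show ?thesis using e by (simp add: power2_eq_square mult_left_mono)
      qed
      then have p: "ereal (phg xstar - \<epsilon> * norm (z - xstar)) \<le> ereal (phg xstar - \<epsilon> * (norm (z - xstar))\<^sup>2)" by simp
      have q: "\<phi> xstar + ereal (0 \<bullet> (z - xstar) - \<epsilon> * norm (z - xstar)) = ereal (phg xstar - \<epsilon> * norm (z - xstar))"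
        unfolding \<phi>_def phi_star by simp
      show "\<phi> xstar + ereal (0 \<bullet> (z - xstar) - \<epsilon> * norm (z - xstar)) \<le> \<phi> z"
        unfolding q using order_trans[OF p l] .
    qed
  qed
  show "0 \<in> limiting_subdiff (\<lambda>y. ereal (f y) + g y) xstar"
    unfolding limiting_subdiff_def
    by (intro CollectI exI[of _ "\<lambda>_. xstar"] exI[of _ "\<lambda>_. 0"]) (use fr in \<open>auto simp: \<phi>_def\<close>)
  fix w :: "real^'n"
  show "second_subderiv (\<lambda>y. ereal (f y) + g y) xstar 0 w \<ge> 0"
    unfolding second_subderiv_def
  proof (subst le_Liminf_iff, intro allI impI)
    fix y :: ereal assume y: "y < 0"
    obtain yr where yr: "y \<le> ereal yr" "yr < 0"
    proof (cases y)
      case (real r) then show ?thesis using y that by auto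
    next
      case MInf then show ?thesis using that[of "-1"] by simp
    next
      case PInf then show ?thesis using y by simp
    qed
    define W1 where "W1 = norm w + 1"
    have W1: "W1 > 0" unfolding W1_def by (simp add: add_nonneg_pos)
    define \<epsilon> where "\<epsilon> = - yr / (4 * W1\<^sup>2)"
    have e: "\<epsilon> > 0" unfolding \<epsilon>_def using yr W1 by (simp add: divide_neg_pos)
    obtain r where r: "r > 0" and lb: "\<And>dd. norm dd < r \<Longrightarrow> ereal (f (xstar + dd)) + g (xstar + dd) \<ge> ereal (phg xstar - \<epsilon> * (norm dd)\<^sup>2)"
      using phi_lb[OF psd e] by blast
    have ev1: "eventually (\<lambda>\<tau>::real. 0 < \<tau> \<and> \<tau> < r / W1) (at_right 0)"
      unfolding eventually_at_right_field using r W1 by (intro exI[of _ "r / W1"]) auto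
    have ev2: "eventually (\<lambda>w'. w' \<in> ball w 1) (nhds w)"
      by (rule eventually_nhds_in_open) auto
    have "eventually (\<lambda>p. (0 < fst p \<and> fst p < r / W1) \<and> snd p \<in> ball w 1) (at_right 0 \<times>\<^sub>F nhds w)"
      by (rule eventually_prodI[OF ev1 ev2])
    then show "eventually (\<lambda>p. y < (case p of (\<tau>, w') \<Rightarrow> ((ereal (f (xstar + \<tau> *\<^sub>R w')) + g (xstar + \<tau> *\<^sub>R w'))
          - ereal (real_of_ereal (ereal (f xstar) + g xstar) + \<tau> * (0 \<bullet> w'))) * ereal (2 / \<tau>\<^sup>2))) (at_right 0 \<times>\<^sub>F nhds w)"
    proof (rule eventually_mono, clarsimp)
      fix \<tau> :: real and w' :: "real^'n"
      assume t: "0 < \<tau>" "\<tau> < r / W1" and w': "dist w w' < 1"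
      have nw: "norm w' < W1" unfolding W1_def using w' norm_triangle_ineq2[of w' w]
        by (simp add: dist_norm norm_minus_commute)
      have nd: "norm (\<tau> *\<^sub>R w') < r"
      proof -
        have "norm (\<tau> *\<^sub>R w') = \<tau> * norm w'" using t by simp
        also have "\<dots> \<le> \<tau> * W1" using t nw by (intro mult_left_mono) auto
        also have "\<dots> < r" using t W1 by (simp add: pos_less_divide_eq)
        finally show ?thesis .
      qed
      have L: "ereal (f (xstar + \<tau> *\<^sub>R w')) + g (xstar + \<tau> *\<^sub>R w') \<ge> ereal (phg xstar - \<epsilon> * (\<tau>\<^sup>2 * (norm w')\<^sup>2))"
        using lb[OF nd] t by (simp add: power_mult_distrib)
      have rs: "real_of_ereal (ereal (f xstar) + g xstar) = phg xstar" unfolding phi_star by simp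
      have bnd: "- 2 * (\<epsilon> * (norm w')\<^sup>2) > yr"
      proof -
        have "(norm w')\<^sup>2 \<le> W1\<^sup>2" using nw by (simp add: power_mono)
        then have "2 * (\<epsilon> * (norm w')\<^sup>2) \<le> 2 * (\<epsilon> * W1\<^sup>2)" using e by (simp add: mult_left_mono)
        also have "2 * (\<epsilon> * W1\<^sup>2) = - yr / 2" unfolding \<epsilon>_def using W1 by (simp add: field_simps)
        finally show ?thesis using yr by linarith
      qed
      show "y < (ereal (f (xstar + \<tau> *\<^sub>R w')) + g (xstar + \<tau> *\<^sub>R w') - ereal (real_of_ereal (ereal (f xstar) + g xstar))) * ereal (2 / \<tau>\<^sup>2)"
        unfolding rs
      proof (cases "g (xstar + \<tau> *\<^sub>R w')")
        case PInf
        then show "y < (ereal (f (xstar + \<tau> *\<^sub>R w')) + g (xstar + \<tau> *\<^sub>R w') - ereal (phg xstar)) * ereal (2 / \<tau>\<^sup>2)"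
          using t y by auto
      next
        case MInf then show "y < (ereal (f (xstar + \<tau> *\<^sub>R w')) + g (xstar + \<tau> *\<^sub>R w') - ereal (phg xstar)) * ereal (2 / \<tau>\<^sup>2)" using pr unfolding proper_fun_def by auto
      next
        case (real a)
        define A where "A = f (xstar + \<tau> *\<^sub>R w') + a"
        have LA: "A \<ge> phg xstar - \<epsilon> * (\<tau>\<^sup>2 * (norm w')\<^sup>2)" using L unfolding A_def real by simp
        have "(A - phg xstar) * (2 / \<tau>\<^sup>2) \<ge> (- \<epsilon> * (\<tau>\<^sup>2 * (norm w')\<^sup>2)) * (2 / \<tau>\<^sup>2)"
          using LA t by (intro mult_right_mono) auto
        also have "(- \<epsilon> * (\<tau>\<^sup>2 * (norm w')\<^sup>2)) * (2 / \<tau>\<^sup>2) = - 2 * (\<epsilon> * (norm w')\<^sup>2)"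
          using t by (simp add: field_simps)
        finally have "(A - phg xstar) * (2 / \<tau>\<^sup>2) > yr" using bnd by linarith
        then have lt: "ereal yr < ereal ((A - phg xstar) * (2 / \<tau>\<^sup>2))" by simp
        have eq: "(ereal (f (xstar + \<tau> *\<^sub>R w')) + g (xstar + \<tau> *\<^sub>R w') - ereal (phg xstar)) * ereal (2 / \<tau>\<^sup>2)
            = ereal ((A - phg xstar) * (2 / \<tau>\<^sup>2))" unfolding real A_def by simp
        show "y < (ereal (f (xstar + \<tau> *\<^sub>R w')) + g (xstar + \<tau> *\<^sub>R w') - ereal (phg xstar)) * ereal (2 / \<tau>\<^sup>2)" unfolding eq using le_less_trans[OF yr(1) lt] .
      qed
    qed
  qed
qed

end

theorem theorem4p9:
  fixes f :: "real ^ 'n \<Rightarrow> real" and G :: "real ^ 'n \<Rightarrow> real ^ 'n"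
    and H :: "real ^ 'n \<Rightarrow> real ^ 'n ^ 'n" and g :: "real ^ 'n \<Rightarrow> ereal"
    and Lf \<rho> :: real
  assumes grad_f: "\<And>x. (f has_derivative (\<lambda>h. G x \<bullet> h)) (at x)"
    and hess_f: "\<And>x. (G has_derivative (\<lambda>h. H x *v h)) (at x)"
    and hess_loc_lip: "\<And>x. \<exists>U L. open U \<and> x \<in> U \<and>
                         (\<forall>y\<in>U. \<forall>z\<in>U. norm (H y - H z) \<le> L * norm (y - z))"
    and Lf_pos: "Lf > 0"
    and grad_lip: "\<And>x y. norm (G x - G y) \<le> Lf * norm (x - y)"
    and g_proper: "proper_fun g" and g_lsc: "lsc_fun g"
    and rho_pos: "\<rho> > 0" and g_wc: "weakly_convex \<rho> g"
    and argmin_ne: "\<exists>z. \<forall>y. ereal (f z) + g z \<le> ereal (f y) + g y"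
  shows "\<exists>\<gamma>bar>0. \<forall>\<gamma> \<delta>0 \<mu>1 \<mu>2 c1 c2 c3 \<beta>2 (x :: nat \<Rightarrow> real ^ 'n) d \<delta> P xstar.
     (0 < \<gamma> \<and> \<gamma> < \<gamma>bar \<and> \<gamma> < 1 / Lf \<and> \<gamma> < 1 / \<rho> \<and> 0 < \<delta>0 \<and>
      0 < \<mu>1 \<and> \<mu>1 < \<mu>2 \<and> \<mu>2 < 1 \<and> 0 < c1 \<and> c1 < c2 \<and> c2 < 1 \<and> 1 < c3 \<and>
      bounded {y. ereal (f y) + g y \<le> ereal (f (x 0)) + g (x 0)} \<and>
      ntra_run f G H g \<gamma> \<delta>0 \<mu>1 \<mu>2 c1 c2 c3 x d \<delta> P \<and>
      x \<longlonglongrightarrow> xstar \<and>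
      xstar \<in> prox_set g \<gamma> (xstar - \<gamma> *\<^sub>R G xstar) \<and>
      (\<exists>U H'. open U \<and> xstar \<in> U \<and> continuous_on U H' \<and>
               (\<forall>y\<in>U. (H has_derivative blinfun_apply (H' y)) (at y))) \<and>
      (\<exists>V D. open V \<and> xstar - \<gamma> *\<^sub>R G xstar \<in> V \<and> continuous_on V D \<and>
               (\<forall>y\<in>V. (prox g \<gamma> has_derivative blinfun_apply (D y)) (at y))) \<and>
      0 < \<beta>2 \<and>
      (\<forall>k. lambda_min (ntra_B H \<gamma> (x k) (P k)) < 0 \<longrightarrow>
          ntra_model f G g \<gamma> (x k) (ntra_B H \<gamma> (x k) (P k)) 0
            - ntra_model f G g \<gamma> (x k) (ntra_B H \<gamma> (x k) (P k)) (d k)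
          \<ge> \<beta>2 * (- lambda_min (ntra_B H \<gamma> (x k) (P k))) * (\<delta> k)\<^sup>2))
     \<longrightarrow> second_order_stationary (\<lambda>y. ereal (f y) + g y) xstar"
proof (intro exI[of _ 1] conjI allI impI)
  show "(0::real) < 1" by simp
  fix \<gamma> \<delta>0 \<mu>1 \<mu>2 c1 c2 c3 \<beta>2 and x :: "nat \<Rightarrow> real ^ 'n" and d \<delta> P xstar
  assume A: "0 < \<gamma> \<and> \<gamma> < 1 \<and> \<gamma> < 1 / Lf \<and> \<gamma> < 1 / \<rho> \<and> 0 < \<delta>0 \<and>
      0 < \<mu>1 \<and> \<mu>1 < \<mu>2 \<and> \<mu>2 < 1 \<and> 0 < c1 \<and> c1 < c2 \<and> c2 < 1 \<and> 1 < c3 \<and>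
      bounded {y. ereal (f y) + g y \<le> ereal (f (x 0)) + g (x 0)} \<and>
      ntra_run f G H g \<gamma> \<delta>0 \<mu>1 \<mu>2 c1 c2 c3 x d \<delta> P \<and>
      x \<longlonglongrightarrow> xstar \<and>
      xstar \<in> prox_set g \<gamma> (xstar - \<gamma> *\<^sub>R G xstar) \<and>
      (\<exists>U H'. open U \<and> xstar \<in> U \<and> continuous_on U H' \<and>
               (\<forall>y\<in>U. (H has_derivative blinfun_apply (H' y)) (at y))) \<and>
      (\<exists>V D. open V \<and> xstar - \<gamma> *\<^sub>R G xstar \<in> V \<and> continuous_on V D \<and>
               (\<forall>y\<in>V. (prox g \<gamma> has_derivative blinfun_apply (D y)) (at y))) \<and>
      0 < \<beta>2 \<and>
      (\<forall>k. lambda_min (ntra_B H \<gamma> (x k) (P k)) < 0 \<longrightarrow>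
          ntra_model f G g \<gamma> (x k) (ntra_B H \<gamma> (x k) (P k)) 0
            - ntra_model f G g \<gamma> (x k) (ntra_B H \<gamma> (x k) (P k)) (d k)
          \<ge> \<beta>2 * (- lambda_min (ntra_B H \<gamma> (x k) (P k))) * (\<delta> k)\<^sup>2)"
  then have gam: "0 < \<gamma>" and grho: "\<gamma> < 1 / \<rho>"
    and par: "0 < \<delta>0" "0 < \<mu>1" "\<mu>1 < \<mu>2" "\<mu>2 < 1" "0 < c1" "c1 < c2" "c2 < 1" "1 < c3"
    and run: "ntra_run f G H g \<gamma> \<delta>0 \<mu>1 \<mu>2 c1 c2 c3 x d \<delta> P"
    and conv: "x \<longlonglongrightarrow> xstar"
    and crit: "xstar \<in> prox_set g \<gamma> (xstar - \<gamma> *\<^sub>R G xstar)"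
    and UH: "\<exists>U H'. open U \<and> xstar \<in> U \<and> continuous_on U H' \<and>
               (\<forall>y\<in>U. (H has_derivative blinfun_apply (H' y)) (at y))"
    and VD: "\<exists>V D. open V \<and> xstar - \<gamma> *\<^sub>R G xstar \<in> V \<and> continuous_on V D \<and>
               (\<forall>y\<in>V. (prox g \<gamma> has_derivative blinfun_apply (D y)) (at y))"
    and b2: "0 < \<beta>2"
    and bcond: "\<forall>k. lambda_min (ntra_B H \<gamma> (x k) (P k)) < 0 \<longrightarrow>
          ntra_model f G g \<gamma> (x k) (ntra_B H \<gamma> (x k) (P k)) 0
            - ntra_model f G g \<gamma> (x k) (ntra_B H \<gamma> (x k) (P k)) (d k)
          \<ge> \<beta>2 * (- lambda_min (ntra_B H \<gamma> (x k) (P k))) * (\<delta> k)\<^sup>2"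
    by auto
  obtain U H' where U: "open U" "xstar \<in> U" "continuous_on U H'" "\<And>y. y \<in> U \<Longrightarrow> (H has_derivative blinfun_apply (H' y)) (at y)"
    using UH by blast
  obtain V D where V: "open V" "xstar - \<gamma> *\<^sub>R G xstar \<in> V" "continuous_on V D" "\<And>y. y \<in> V \<Longrightarrow> (prox g \<gamma> has_derivative blinfun_apply (D y)) (at y)"
    using VD by blast
  have gr: "\<gamma> * \<rho> < 1" using grho rho_pos by (simp add: less_divide_eq)
  interpret ntractx f G H g \<rho> \<gamma> xstar U H' V D
    by (rule ntractx.intro) (use grad_f hess_f g_proper g_lsc g_wc rho_pos gam gr crit U V in auto)
  have psd: "\<And>v. v \<bullet> (BB xstar *v v) \<ge> 0"
    by (rule psd[OF run par conv b2 bcond])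
  show "second_order_stationary (\<lambda>y. ereal (f y) + g y) xstar" by (rule sos[OF psd])
qed

end
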